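(* There do not exist symmetric homogeneous stable means $K,M$, each possessing a symmetric asymptotic expansion, such that the first Seiffert mean $P$ is $(K,M)$-stabilizable, i.e. such that $P(s,t)=K\big(P(s,M(s,t)),P(M(s,t),t)\big)$ for all $s,t>0$. The same holds with $P$ replaced by the second Seiffert mean $T$ or by the Neuman–Sándor mean $NS$.
   Context: For $s,t>0$, $s\ne t$: $P(s,t)=\frac{t-s}{2\arcsin\frac{t-s}{t+s}}$, $T(s,t)=\frac{t-s}{2\arctan\frac{t-s}{t+s}}$, $NS(s,t)=\frac{t-s}{2\operatorname{arcsinh}\frac{t-s}{t+s}}$, each equal to $s$ when $s=t$. A bi-variate mean is $M:(0,\infty)^2\to(0,\infty)$ with $\min\le M\le\max$; symmetric, homogeneous (degree 1). $M$ is stable if $M(s,t)=M\big(M(s,M(s,t)),M(M(s,t),t)\big)$. For stable $K,M$, $N$ is $(K,M)$-stabilizable if $N(s,t)=K\big(N(s,M(s,t)),N(M(s,t),t)\big)$ for all $s,t>0$. A mean has a symmetric asymptotic expansion with coefficients $(a_n)$ if for every fixed real $t$ and $N\ge0$, $M(x-t,x+t)=\sum_{n=0}^Na_nt^{2n}x^{-2n+1}+o(x^{-2N+1})$ as $x\to\infty$. *)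

theory Defs
  imports "HOL-Analysis.Analysis" "HOL-Library.Landau_Symbols"
begin

definition seiffert_P :: "real \<Rightarrow> real \<Rightarrow> real" where
  "seiffert_P s t = (if s = t then s else (t - s) / (2 * arcsin ((t - s) / (t + s))))"

definition seiffert_T :: "real \<Rightarrow> real \<Rightarrow> real" where
  "seiffert_T s t = (if s = t then s else (t - s) / (2 * arctan ((t - s) / (t + s))))"

definition neuman_sandor :: "real \<Rightarrow> real \<Rightarrow> real" where
  "neuman_sandor s t = (if s = t then s else (t - s) / (2 * arsinh ((t - s) / (t + s))))"

definition is_mean :: "(real \<Rightarrow> real \<Rightarrow> real) \<Rightarrow> bool" where
  "is_mean M \<longleftrightarrow> (\<forall>s>0. \<forall>t>0. min s t \<le> M s t \<and> M s t \<le> max s t)"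

definition symmetric_mean :: "(real \<Rightarrow> real \<Rightarrow> real) \<Rightarrow> bool" where
  "symmetric_mean M \<longleftrightarrow> (\<forall>s>0. \<forall>t>0. M s t = M t s)"

definition homogeneous_mean :: "(real \<Rightarrow> real \<Rightarrow> real) \<Rightarrow> bool" where
  "homogeneous_mean M \<longleftrightarrow> (\<forall>l>0. \<forall>s>0. \<forall>t>0. M (l * s) (l * t) = l * M s t)"

definition stable_mean :: "(real \<Rightarrow> real \<Rightarrow> real) \<Rightarrow> bool" where
  "stable_mean M \<longleftrightarrow> (\<forall>s>0. \<forall>t>0. M s t = M (M s (M s t)) (M (M s t) t))"

definition stabilizable ::
  "(real \<Rightarrow> real \<Rightarrow> real) \<Rightarrow> (real \<Rightarrow> real \<Rightarrow> real) \<Rightarrow> (real \<Rightarrow> real \<Rightarrow> real) \<Rightarrow> bool" where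
  "stabilizable N K M \<longleftrightarrow> (\<forall>s>0. \<forall>t>0. N s t = K (N s (M s t)) (N (M s t) t))"

definition has_sym_asymp_expansion :: "(real \<Rightarrow> real \<Rightarrow> real) \<Rightarrow> (nat \<Rightarrow> real) \<Rightarrow> bool" where
  "has_sym_asymp_expansion M a \<longleftrightarrow>
     (\<forall>t::real. \<forall>N::nat.
        (\<lambda>x. M (x - t) (x + t) - (\<Sum>n\<le>N. a n * t ^ (2 * n) * x powr (1 - 2 * real n)))
          \<in> o[at_top](\<lambda>x. x powr (1 - 2 * real N)))"

definition good_mean :: "(real \<Rightarrow> real \<Rightarrow> real) \<Rightarrow> bool" where
  "good_mean M \<longleftrightarrow> is_mean M \<and> symmetric_mean M \<and> homogeneous_mean M \<and> stable_mean M
     \<and> (\<exists>a. has_sym_asymp_expansion M a)"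

end

theory Submission
  imports Defs "HOL-Real_Asymp.Real_Asymp"
begin


fun P7 :: "real list \<Rightarrow> real \<Rightarrow> real" where
  "P7 [c0,c1,c2,c3,c4,c5,c6] e = c0 + c1*e + c2*e^2 + c3*e^3 + c4*e^4 + c5*e^5 + c6*e^6"
| "P7 _ e = 0"

definition small :: "(real \<Rightarrow> real) \<Rightarrow> bool" where
  "small f \<longleftrightarrow> (\<forall>\<epsilon>>0. \<exists>\<delta>>0. \<forall>e. \<bar>e\<bar> < \<delta> \<longrightarrow> \<bar>f e\<bar> \<le> \<epsilon> * \<bar>e\<bar>^6)"

definition expands :: "(real \<Rightarrow> real) \<Rightarrow> real list \<Rightarrow> bool" where
  "expands f c \<longleftrightarrow> small (\<lambda>e. f e - P7 c e)"

definition lbd :: "(real \<Rightarrow> real) \<Rightarrow> bool" where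
  "lbd g \<longleftrightarrow> (\<exists>\<delta>>0. \<exists>B. \<forall>e. \<bar>e\<bar> < \<delta> \<longrightarrow> \<bar>g e\<bar> \<le> B)"

lemma small_add:
  assumes "small f" "small g" shows "small (\<lambda>e. f e + g e)"
  unfolding small_def
proof (intro allI impI)
  fix \<epsilon> :: real assume "\<epsilon> > 0"
  then have h: "\<epsilon>/2 > 0" by simp
  obtain d1 where d1: "d1 > 0" "\<forall>e. \<bar>e\<bar> < d1 \<longrightarrow> \<bar>f e\<bar> \<le> \<epsilon>/2 * \<bar>e\<bar>^6"
    using assms(1) h unfolding small_def by blast
  obtain d2 where d2: "d2 > 0" "\<forall>e. \<bar>e\<bar> < d2 \<longrightarrow> \<bar>g e\<bar> \<le> \<epsilon>/2 * \<bar>e\<bar>^6"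
    using assms(2) h unfolding small_def by blast
  show "\<exists>\<delta>>0. \<forall>e. \<bar>e\<bar> < \<delta> \<longrightarrow> \<bar>f e + g e\<bar> \<le> \<epsilon> * \<bar>e\<bar>^6"
  proof (intro exI[of _ "min d1 d2"] conjI allI impI)
    fix e :: real assume "\<bar>e\<bar> < min d1 d2"
    with d1 d2 have "\<bar>f e\<bar> \<le> \<epsilon>/2 * \<bar>e\<bar>^6" "\<bar>g e\<bar> \<le> \<epsilon>/2 * \<bar>e\<bar>^6" by auto
    then show "\<bar>f e + g e\<bar> \<le> \<epsilon> * \<bar>e\<bar>^6" by linarith
  qed (use d1 d2 in auto)
qed

lemma small_scale:
  assumes "small f" shows "small (\<lambda>e. k * f e)"
  unfolding small_def
proof (intro allI impI)
  fix \<epsilon> :: real assume "\<epsilon> > 0"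
  then have "\<epsilon> / (\<bar>k\<bar>+1) > 0" by simp
  then obtain d where d: "d > 0" "\<forall>e. \<bar>e\<bar> < d \<longrightarrow> \<bar>f e\<bar> \<le> \<epsilon>/(\<bar>k\<bar>+1) * \<bar>e\<bar>^6"
    using assms unfolding small_def by blast
  show "\<exists>\<delta>>0. \<forall>e. \<bar>e\<bar> < \<delta> \<longrightarrow> \<bar>k * f e\<bar> \<le> \<epsilon> * \<bar>e\<bar>^6"
  proof (intro exI[of _ d] conjI allI impI)
    fix e :: real assume "\<bar>e\<bar> < d"
    with d have h: "\<bar>f e\<bar> \<le> \<epsilon>/(\<bar>k\<bar>+1) * \<bar>e\<bar>^6" by auto
    have "\<bar>k * f e\<bar> = \<bar>k\<bar> * \<bar>f e\<bar>" by (simp add: abs_mult)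
    also have "\<dots> \<le> (\<bar>k\<bar>+1) * (\<epsilon>/(\<bar>k\<bar>+1) * \<bar>e\<bar>^6)"
      by (rule mult_mono) (use h in auto)
    also have "\<dots> = \<epsilon> * \<bar>e\<bar>^6" by (simp add: field_simps)
    finally show "\<bar>k * f e\<bar> \<le> \<epsilon> * \<bar>e\<bar>^6" .
  qed (use d in auto)
qed

lemma small_diff:
  assumes "small f" "small g" shows "small (\<lambda>e. f e - g e)"
  using small_add[OF assms(1) small_scale[OF assms(2), of "-1"]] by simp

lemma small_cong:
  assumes "small f" "r > 0" "\<And>e. \<bar>e\<bar> < r \<Longrightarrow> f e = g e" shows "small g"
  unfolding small_def
proof (intro allI impI)
  fix \<epsilon> :: real assume "\<epsilon> > 0"
  then obtain d where d: "d > 0" "\<forall>e. \<bar>e\<bar> < d \<longrightarrow> \<bar>f e\<bar> \<le> \<epsilon> * \<bar>e\<bar>^6"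
    using assms unfolding small_def by blast
  show "\<exists>\<delta>>0. \<forall>e. \<bar>e\<bar> < \<delta> \<longrightarrow> \<bar>g e\<bar> \<le> \<epsilon> * \<bar>e\<bar>^6"
    by (rule exI[of _ "min d r"]) (use d assms in auto)
qed

lemma small_mult_lbd:
  assumes "small f" "lbd g" shows "small (\<lambda>e. f e * g e)"
  unfolding small_def
proof (intro allI impI)
  fix \<epsilon> :: real assume "\<epsilon> > 0"
  obtain r B where r: "r > 0" "\<forall>e. \<bar>e\<bar> < r \<longrightarrow> \<bar>g e\<bar> \<le> B" using assms(2) unfolding lbd_def by blast
  have "\<epsilon> / (\<bar>B\<bar>+1) > 0" using \<open>\<epsilon>>0\<close> by simp
  then obtain d where d: "d > 0" "\<forall>e. \<bar>e\<bar> < d \<longrightarrow> \<bar>f e\<bar> \<le> \<epsilon>/(\<bar>B\<bar>+1) * \<bar>e\<bar>^6"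
    using assms(1) unfolding small_def by blast
  show "\<exists>\<delta>>0. \<forall>e. \<bar>e\<bar> < \<delta> \<longrightarrow> \<bar>f e * g e\<bar> \<le> \<epsilon> * \<bar>e\<bar>^6"
  proof (intro exI[of _ "min d r"] conjI allI impI)
    fix e :: real assume "\<bar>e\<bar> < min d r"
    with d r have h: "\<bar>f e\<bar> \<le> \<epsilon>/(\<bar>B\<bar>+1) * \<bar>e\<bar>^6" "\<bar>g e\<bar> \<le> \<bar>B\<bar>+1" by auto
    have "\<bar>f e * g e\<bar> = \<bar>f e\<bar> * \<bar>g e\<bar>" by (simp add: abs_mult)
    also have "\<dots> \<le> (\<epsilon>/(\<bar>B\<bar>+1) * \<bar>e\<bar>^6) * (\<bar>B\<bar>+1)"
      by (rule mult_mono) (use h in auto)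
    also have "\<dots> = \<epsilon> * \<bar>e\<bar>^6" by (simp add: field_simps)
    finally show "\<bar>f e * g e\<bar> \<le> \<epsilon> * \<bar>e\<bar>^6" .
  qed (use d r in auto)
qed

lemma lbd_cont: assumes "continuous (at 0) g" shows "lbd g"
proof -
  obtain d where d: "d > 0" "\<forall>x. dist x 0 < d \<longrightarrow> dist (g x) (g 0) < 1"
    using assms unfolding continuous_at_eps_delta by (meson zero_less_one)
  show ?thesis unfolding lbd_def
    by (rule exI[of _ d], rule conjI[OF d(1)], rule exI[of _ "\<bar>g 0\<bar> + 1"])
       (use d in \<open>auto simp: dist_real_def\<close>)
qed

lemma lbd_add: assumes "lbd f" "lbd g" shows "lbd (\<lambda>e. f e + g e)"
proof -
  obtain r B where r: "r > 0" "\<forall>e. \<bar>e\<bar> < r \<longrightarrow> \<bar>f e\<bar> \<le> B" using assms(1) unfolding lbd_def by blast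
  obtain r' B' where r': "r' > 0" "\<forall>e. \<bar>e\<bar> < r' \<longrightarrow> \<bar>g e\<bar> \<le> B'" using assms(2) unfolding lbd_def by blast
  show ?thesis unfolding lbd_def
    by (rule exI[of _ "min r r'"], rule conjI, simp add: r r', rule exI[of _ "B+B'"])
       (use r r' in \<open>auto intro!: order.trans[OF abs_triangle_ineq] add_mono\<close>)
qed

lemma small_e7: assumes "lbd g" shows "small (\<lambda>e. e^7 * g e)"
  unfolding small_def
proof (intro allI impI)
  fix \<epsilon> :: real assume "\<epsilon> > 0"
  obtain r B where r: "r > 0" "\<forall>e. \<bar>e\<bar> < r \<longrightarrow> \<bar>g e\<bar> \<le> B" using assms unfolding lbd_def by blast
  define d where "d = min r (\<epsilon> / (\<bar>B\<bar>+1))"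
  have dpos: "d > 0" using r \<open>\<epsilon>>0\<close> by (simp add: d_def)
  show "\<exists>\<delta>>0. \<forall>e. \<bar>e\<bar> < \<delta> \<longrightarrow> \<bar>e^7 * g e\<bar> \<le> \<epsilon> * \<bar>e\<bar>^6"
  proof (intro exI[of _ d] conjI allI impI dpos)
    fix e :: real assume e: "\<bar>e\<bar> < d"
    then have h: "\<bar>g e\<bar> \<le> \<bar>B\<bar>+1" using r by (auto simp: d_def)
    have "\<bar>e\<bar> < \<epsilon> / (\<bar>B\<bar>+1)" using e by (simp add: d_def)
    then have he: "\<bar>e\<bar> * (\<bar>B\<bar>+1) \<le> \<epsilon>" by (simp add: pos_less_divide_eq less_imp_le)
    have "\<bar>e^7 * g e\<bar> = \<bar>e\<bar>^6 * (\<bar>e\<bar> * \<bar>g e\<bar>)"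
    proof -
      have "e^7 * g e = e^6 * (e * g e)" by algebra
      then show ?thesis by (simp only: abs_mult power_abs)
    qed
    also have "\<dots> \<le> \<bar>e\<bar>^6 * (\<bar>e\<bar> * (\<bar>B\<bar>+1))"
      by (intro mult_left_mono) (use h in auto)
    also have "\<dots> \<le> \<bar>e\<bar>^6 * \<epsilon>" by (intro mult_left_mono he) auto
    finally show "\<bar>e^7 * g e\<bar> \<le> \<epsilon> * \<bar>e\<bar>^6" by (simp add: mult.commute)
  qed
qed

lemma small_at0: assumes "small f" shows "f 0 = 0"
proof -
  obtain d where d: "d > 0" "\<forall>e. \<bar>e\<bar> < d \<longrightarrow> \<bar>f e\<bar> \<le> 1 * \<bar>e\<bar>^6"
    using assms unfolding small_def by (meson zero_less_one)
  have "\<bar>f 0\<bar> \<le> 1 * \<bar>0::real\<bar>^6" using d(2)[rule_format, of 0] d(1) by simp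
  then show ?thesis by simp
qed

lemma small_bound1: assumes "small f" shows "\<exists>d>0. \<forall>e. \<bar>e\<bar> < d \<longrightarrow> \<bar>f e\<bar> \<le> \<bar>e\<bar>"
proof -
  obtain d where d: "d > 0" "\<forall>e. \<bar>e\<bar> < d \<longrightarrow> \<bar>f e\<bar> \<le> 1 * \<bar>e\<bar>^6"
    using assms unfolding small_def by (meson zero_less_one)
  show ?thesis
  proof (intro exI[of _ "min d 1"] conjI allI impI)
    fix e :: real assume e: "\<bar>e\<bar> < min d 1"
    then have "\<bar>f e\<bar> \<le> \<bar>e\<bar>^6" using d by auto
    also have "\<bar>e\<bar>^6 \<le> \<bar>e\<bar>^1" using e by (intro power_decreasing) auto
    finally show "\<bar>f e\<bar> \<le> \<bar>e\<bar>" by simp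
  qed (use d in auto)
qed

lemma P7_fun: "P7 [c0,c1,c2,c3,c4,c5,c6] = (\<lambda>e. c0 + c1*e + c2*e^2 + c3*e^3 + c4*e^4 + c5*e^5 + c6*e^6)"
  by (rule ext) simp

lemma P7_cont: "continuous (at x) (P7 [c0,c1,c2,c3,c4,c5,c6])"
  unfolding P7_fun by (intro continuous_intros)

lemma lbd_P7: "lbd (P7 [c0,c1,c2,c3,c4,c5,c6])"
  using P7_cont by (rule lbd_cont)

lemma lbd_expands: assumes "expands f [c0,c1,c2,c3,c4,c5,c6]" shows "lbd f"
proof -
  obtain d where d: "d > 0" "\<forall>e. \<bar>e\<bar> < d \<longrightarrow> \<bar>f e - P7 [c0,c1,c2,c3,c4,c5,c6] e\<bar> \<le> \<bar>e\<bar>"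
    using small_bound1 assms unfolding expands_def by blast
  have "lbd (\<lambda>e. f e - P7 [c0,c1,c2,c3,c4,c5,c6] e)" unfolding lbd_def
    by (rule exI[of _ "min d 1"]) (use d in \<open>auto intro!: exI[of _ 1]\<close>)
  from lbd_add[OF this lbd_P7[of c0 c1 c2 c3 c4 c5 c6]] show ?thesis by simp
qed

lemma expands_P7: "expands (P7 c) c"
  unfolding expands_def small_def by auto

lemma expands_cong:
  assumes "expands f c" "r > 0" "\<And>e. \<bar>e\<bar> < r \<Longrightarrow> f e = g e" shows "expands g c"
  using assms unfolding expands_def by (auto intro: small_cong)

lemma expands_eq: "expands f c \<Longrightarrow> c = c' \<Longrightarrow> expands f c'" by simp

lemma expands_add:
  assumes "expands f [c0,c1,c2,c3,c4,c5,c6]" "expands g [d0,d1,d2,d3,d4,d5,d6]"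
  shows "expands (\<lambda>e. f e + g e) [c0+d0,c1+d1,c2+d2,c3+d3,c4+d4,c5+d5,c6+d6]"
  using small_add[OF assms[unfolded expands_def]] unfolding expands_def
  by (simp add: algebra_simps)

lemma expands_scale:
  assumes "expands f [c0,c1,c2,c3,c4,c5,c6]"
  shows "expands (\<lambda>e. k * f e) [k*c0,k*c1,k*c2,k*c3,k*c4,k*c5,k*c6]"
  using small_scale[OF assms[unfolded expands_def], of k] unfolding expands_def
  by (simp add: algebra_simps)

lemma expands_const: "expands (\<lambda>e. k) [k,0,0,0,0,0,0]"
  unfolding expands_def small_def by auto

lemma expands_id: "expands (\<lambda>e. e) [0,1,0,0,0,0,0]"
  unfolding expands_def small_def by auto

lemma expands_mult:
  assumes "expands f [c0,c1,c2,c3,c4,c5,c6]" "expands g [d0,d1,d2,d3,d4,d5,d6]"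
  "h0 = c0*d0"
  "h1 = c0*d1 + c1*d0"
  "h2 = c0*d2 + c1*d1 + c2*d0"
  "h3 = c0*d3 + c1*d2 + c2*d1 + c3*d0"
  "h4 = c0*d4 + c1*d3 + c2*d2 + c3*d1 + c4*d0"
  "h5 = c0*d5 + c1*d4 + c2*d3 + c3*d2 + c4*d1 + c5*d0"
  "h6 = c0*d6 + c1*d5 + c2*d4 + c3*d3 + c4*d2 + c5*d1 + c6*d0"
  shows "expands (\<lambda>e. f e * g e) [h0,h1,h2,h3,h4,h5,h6]"
proof -
  let ?C = "P7 [c0,c1,c2,c3,c4,c5,c6]" and ?D = "P7 [d0,d1,d2,d3,d4,d5,d6]" and ?H = "P7 [h0,h1,h2,h3,h4,h5,h6]"
  define R where "R e = (c1*d6 + c2*d5 + c3*d4 + c4*d3 + c5*d2 + c6*d1) + (c2*d6 + c3*d5 + c4*d4 + c5*d3 + c6*d2) * e + (c3*d6 + c4*d5 + c5*d4 + c6*d3) * e^2 + (c4*d6 + c5*d5 + c6*d4) * e^3 + (c5*d6 + c6*d5) * e^4 + (c6*d6) * e^5" for e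
  have id: "?C e * ?D e - ?H e = e^7 * R e" for e
    unfolding R_def assms(3-9) by simp algebra
  have s1: "small (\<lambda>e. (f e - ?C e) * g e)"
    using assms(1) lbd_expands[OF assms(2)] unfolding expands_def by (rule small_mult_lbd)
  have s2: "small (\<lambda>e. (g e - ?D e) * ?C e)"
    using assms(2) lbd_P7 unfolding expands_def by (rule small_mult_lbd)
  have s3: "small (\<lambda>e. e^7 * R e)"
    by (rule small_e7, rule lbd_cont) (simp add: R_def continuous_intros)
  have "small (\<lambda>e. (f e - ?C e) * g e + (g e - ?D e) * ?C e + e^7 * R e)"
    by (intro small_add s1 s2 s3)
  moreover have "(f e - ?C e) * g e + (g e - ?D e) * ?C e + e^7 * R e = f e * g e - ?H e" for e
    using id[of e] by (simp add: algebra_simps)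
  ultimately show ?thesis unfolding expands_def by simp
qed

lemma expands_away:
  assumes "expands x [X0,X1,X2,X3,X4,X5,X6]" "X0 \<noteq> 0"
  shows "\<exists>r>0. \<forall>e. \<bar>e\<bar> < r \<longrightarrow> \<bar>x e - X0\<bar> \<le> \<bar>X0\<bar>/2"
proof -
  have "\<bar>X0\<bar>/4 > 0" using assms(2) by simp
  then obtain d1 where d1: "d1 > 0" "\<forall>y. dist y 0 < d1 \<longrightarrow> dist (P7 [X0,X1,X2,X3,X4,X5,X6] y) (P7 [X0,X1,X2,X3,X4,X5,X6] 0) < \<bar>X0\<bar>/4"
    using P7_cont[of 0 X0 X1 X2 X3 X4 X5 X6] unfolding continuous_at_eps_delta by blast
  obtain d2 where d2: "d2 > 0" "\<forall>e. \<bar>e\<bar> < d2 \<longrightarrow> \<bar>x e - P7 [X0,X1,X2,X3,X4,X5,X6] e\<bar> \<le> \<bar>e\<bar>"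
    using small_bound1 assms(1) unfolding expands_def by blast
  define r where "r = min d1 (min d2 (\<bar>X0\<bar>/4))"
  have rpos: "r > 0" using d1 d2 assms(2) by (simp add: r_def)
  have "\<bar>x e - X0\<bar> \<le> \<bar>X0\<bar>/2" if e: "\<bar>e\<bar> < r" for e
  proof -
    have "\<bar>P7 [X0,X1,X2,X3,X4,X5,X6] e - X0\<bar> < \<bar>X0\<bar>/4"
      using d1(2)[rule_format, of e] e by (simp add: dist_real_def r_def)
    moreover have "\<bar>x e - P7 [X0,X1,X2,X3,X4,X5,X6] e\<bar> \<le> \<bar>e\<bar>" using d2 e by (auto simp: r_def)
    moreover have "\<bar>e\<bar> < \<bar>X0\<bar>/4" using e by (simp add: r_def)
    ultimately show ?thesis by linarith
  qed
  then show ?thesis using rpos by blast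
qed

lemma small_div:
  assumes "small h" "r > 0" "m > 0" "\<And>e. \<bar>e\<bar> < r \<Longrightarrow> \<bar>x e\<bar> \<ge> m"
  shows "small (\<lambda>e. h e / x e)"
proof -
  have b: "\<bar>1 / x e\<bar> \<le> 1/m" if "\<bar>e\<bar> < r" for e
  proof -
    have "\<bar>x e\<bar> \<ge> m" using that by (rule assms(4))
    then show ?thesis using assms(3) by (simp add: frac_le abs_divide)
  qed
  have "lbd (\<lambda>e. 1 / x e)" unfolding lbd_def using assms(2) b by blast
  from small_mult_lbd[OF assms(1) this] show ?thesis by simp
qed

lemma expands_div:
  assumes "expands d [D0,D1,D2,D3,D4,D5,D6]" "expands x [X0,X1,X2,X3,X4,X5,X6]" "X0 \<noteq> 0"
  "D0 = Q0*X0"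
  "D1 = Q0*X1 + Q1*X0"
  "D2 = Q0*X2 + Q1*X1 + Q2*X0"
  "D3 = Q0*X3 + Q1*X2 + Q2*X1 + Q3*X0"
  "D4 = Q0*X4 + Q1*X3 + Q2*X2 + Q3*X1 + Q4*X0"
  "D5 = Q0*X5 + Q1*X4 + Q2*X3 + Q3*X2 + Q4*X1 + Q5*X0"
  "D6 = Q0*X6 + Q1*X5 + Q2*X4 + Q3*X3 + Q4*X2 + Q5*X1 + Q6*X0"
  shows "expands (\<lambda>e. d e / x e) [Q0,Q1,Q2,Q3,Q4,Q5,Q6]"
proof -
  let ?Q = "P7 [Q0,Q1,Q2,Q3,Q4,Q5,Q6]" and ?D = "P7 [D0,D1,D2,D3,D4,D5,D6]"
  have m: "expands (\<lambda>e. ?Q e * x e) [D0,D1,D2,D3,D4,D5,D6]"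
    by (rule expands_mult[OF expands_P7 assms(2)]) (simp_all add: assms(4-10))
  have "small (\<lambda>e. (d e - ?D e) - (?Q e * x e - ?D e))"
    using small_diff assms(1) m unfolding expands_def by blast
  then have s: "small (\<lambda>e. d e - ?Q e * x e)" by simp
  obtain r where r: "r > 0" "\<forall>e. \<bar>e\<bar> < r \<longrightarrow> \<bar>x e - X0\<bar> \<le> \<bar>X0\<bar>/2"
    using expands_away[OF assms(2,3)] by blast
  have low: "\<bar>x e\<bar> \<ge> \<bar>X0\<bar>/2" if "\<bar>e\<bar> < r" for e
    using r(2)[rule_format, OF that] by linarith
  have s2: "small (\<lambda>e. (d e - ?Q e * x e) / x e)"
    by (rule small_div[OF s r(1) _ low]) (use assms(3) in auto)
  have "small (\<lambda>e. d e / x e - ?Q e)"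
  proof (rule small_cong[OF s2 r(1)])
    fix e :: real assume "\<bar>e\<bar> < r"
    then have "x e \<noteq> 0" using low[of e] assms(3) by auto
    then show "(d e - ?Q e * x e) / x e = d e / x e - ?Q e" by (simp add: field_simps)
  qed
  then show ?thesis unfolding expands_def .
qed

lemma expands_comp:
  assumes "expands m [M0,M1,M2,M3,M4,M5,M6]" "expands q [0,Q1,Q2,Q3,Q4,Q5,Q6]"
  shows "small (\<lambda>e. m (q e) - P7 [M0,M1,M2,M3,M4,M5,M6] (q e))"
proof -
  define R where "R e = Q1 + Q2*e + Q3*e^2 + Q4*e^3 + Q5*e^4 + Q6*e^5" for e
  have PR: "P7 [0,Q1,Q2,Q3,Q4,Q5,Q6] e = e * R e" for e by (simp add: R_def) algebra
  have "lbd R" by (rule lbd_cont) (simp add: R_def[abs_def] continuous_intros)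
  then obtain r1 B where r1: "r1 > 0" "\<forall>e. \<bar>e\<bar> < r1 \<longrightarrow> \<bar>R e\<bar> \<le> B" unfolding lbd_def by blast
  obtain r2 where r2: "r2 > 0" "\<forall>e. \<bar>e\<bar> < r2 \<longrightarrow> \<bar>q e - P7 [0,Q1,Q2,Q3,Q4,Q5,Q6] e\<bar> \<le> \<bar>e\<bar>"
    using small_bound1 assms(2) unfolding expands_def by blast
  define C where "C = \<bar>B\<bar> + 1"
  have Cpos: "C > 0" by (simp add: C_def)
  have qb: "\<bar>q e\<bar> \<le> C * \<bar>e\<bar>" if "\<bar>e\<bar> < min r1 r2" for e
  proof -
    have "\<bar>R e\<bar> \<le> \<bar>B\<bar>" using r1 that by force
    then have "\<bar>e * R e\<bar> \<le> \<bar>e\<bar> * \<bar>B\<bar>" by (simp add: abs_mult mult_left_mono)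
    moreover have "\<bar>q e - e * R e\<bar> \<le> \<bar>e\<bar>" using r2 that PR by auto
    ultimately show ?thesis unfolding C_def by (simp add: algebra_simps)
  qed
  show ?thesis unfolding small_def
  proof (intro allI impI)
    fix \<epsilon> :: real assume "\<epsilon> > 0"
    then have "\<epsilon> / C^6 > 0" using Cpos by simp
    then obtain d where d: "d > 0" "\<forall>y. \<bar>y\<bar> < d \<longrightarrow> \<bar>m y - P7 [M0,M1,M2,M3,M4,M5,M6] y\<bar> \<le> \<epsilon> / C^6 * \<bar>y\<bar>^6"
      using assms(1) unfolding expands_def small_def by blast
    show "\<exists>\<delta>>0. \<forall>e. \<bar>e\<bar> < \<delta> \<longrightarrow> \<bar>m (q e) - P7 [M0,M1,M2,M3,M4,M5,M6] (q e)\<bar> \<le> \<epsilon> * \<bar>e\<bar>^6"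
    proof (intro exI[of _ "min (min r1 r2) (d / C)"] conjI allI impI)
      fix e :: real assume e: "\<bar>e\<bar> < min (min r1 r2) (d / C)"
      then have qe: "\<bar>q e\<bar> \<le> C * \<bar>e\<bar>" using qb by auto
      have "C * \<bar>e\<bar> < d" using e Cpos by (simp add: pos_less_divide_eq mult.commute)
      then have "\<bar>q e\<bar> < d" using qe by linarith
      then have "\<bar>m (q e) - P7 [M0,M1,M2,M3,M4,M5,M6] (q e)\<bar> \<le> \<epsilon> / C^6 * \<bar>q e\<bar>^6" using d by blast
      also have "\<dots> \<le> \<epsilon> / C^6 * (C * \<bar>e\<bar>)^6"
        by (intro mult_left_mono power_mono qe) (use \<open>\<epsilon>>0\<close> Cpos in auto)
      also have "\<dots> = \<epsilon> * \<bar>e\<bar>^6" using Cpos by (simp add: power_mult_distrib)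
      finally show "\<bar>m (q e) - P7 [M0,M1,M2,M3,M4,M5,M6] (q e)\<bar> \<le> \<epsilon> * \<bar>e\<bar>^6" .
    qed (use r1 r2 d Cpos in auto)
  qed
qed

lemma expands_refl:
  assumes "expands f [c0,c1,c2,c3,c4,c5,c6]"
  shows "expands (\<lambda>e. f (-e)) [c0,-c1,c2,-c3,c4,-c5,c6]"
  unfolding expands_def small_def
proof (intro allI impI)
  fix \<epsilon> :: real assume "\<epsilon> > 0"
  then obtain d where d: "d > 0" "\<forall>e. \<bar>e\<bar> < d \<longrightarrow> \<bar>f e - P7 [c0,c1,c2,c3,c4,c5,c6] e\<bar> \<le> \<epsilon> * \<bar>e\<bar>^6"
    using assms unfolding expands_def small_def by blast
  show "\<exists>\<delta>>0. \<forall>e. \<bar>e\<bar> < \<delta> \<longrightarrow> \<bar>f (-e) - P7 [c0,-c1,c2,-c3,c4,-c5,c6] e\<bar> \<le> \<epsilon> * \<bar>e\<bar>^6"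
  proof (intro exI[of _ d] conjI allI impI d(1))
    fix e :: real assume "\<bar>e\<bar> < d"
    then have "\<bar>f (-e) - P7 [c0,c1,c2,c3,c4,c5,c6] (-e)\<bar> \<le> \<epsilon> * \<bar>-e\<bar>^6" using d(2)[rule_format, of "-e"] by simp
    moreover have "P7 [c0,c1,c2,c3,c4,c5,c6] (-e) = P7 [c0,-c1,c2,-c3,c4,-c5,c6] e" by simp
    ultimately show "\<bar>f (-e) - P7 [c0,-c1,c2,-c3,c4,-c5,c6] e\<bar> \<le> \<epsilon> * \<bar>e\<bar>^6" by simp
  qed
qed

lemma zero_step:
  fixes c :: real and G :: "real \<Rightarrow> real"
  assumes H: "\<forall>\<epsilon>>0. \<exists>\<delta>>0. \<forall>e. 0 < \<bar>e\<bar> \<and> \<bar>e\<bar> < \<delta> \<longrightarrow> \<bar>c + e * G e\<bar> \<le> \<epsilon> * \<bar>e\<bar>^(Suc n)"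
    and G: "continuous (at 0) G"
  shows "c = 0 \<and> (\<forall>\<epsilon>>0. \<exists>\<delta>>0. \<forall>e. 0 < \<bar>e\<bar> \<and> \<bar>e\<bar> < \<delta> \<longrightarrow> \<bar>G e\<bar> \<le> \<epsilon> * \<bar>e\<bar>^n)"
proof -
  obtain d where d: "d > 0" "\<forall>e. 0 < \<bar>e\<bar> \<and> \<bar>e\<bar> < d \<longrightarrow> \<bar>c + e * G e\<bar> \<le> 1 * \<bar>e\<bar>^(Suc n)"
    using H[rule_format, of "1::real"] by auto
  have ev: "eventually (\<lambda>e. norm (c + e * G e) \<le> \<bar>e\<bar>^(Suc n)) (at (0::real))"
    unfolding eventually_at by (rule exI[of _ d]) (use d in \<open>auto simp: dist_real_def\<close>)
  have "((\<lambda>e. \<bar>e\<bar>^(Suc n)) \<longlongrightarrow> \<bar>0::real\<bar>^(Suc n)) (at 0)"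
    by (intro tendsto_intros)
  then have "((\<lambda>e. \<bar>e\<bar>^(Suc n)) \<longlongrightarrow> 0) (at (0::real))" by simp
  from Lim_null_comparison[OF ev this] have l0: "((\<lambda>e. c + e * G e) \<longlongrightarrow> 0) (at 0)" .
  have "isCont (\<lambda>e. c + e * G e) 0" using G by (intro continuous_intros) auto
  then have lc: "((\<lambda>e. c + e * G e) \<longlongrightarrow> c) (at 0)" using isCont_def[THEN iffD1] by fastforce
  have c0: "c = 0" using LIM_unique[OF lc l0] .
  have "\<forall>\<epsilon>>0. \<exists>\<delta>>0. \<forall>e. 0 < \<bar>e\<bar> \<and> \<bar>e\<bar> < \<delta> \<longrightarrow> \<bar>G e\<bar> \<le> \<epsilon> * \<bar>e\<bar>^n"
  proof (intro allI impI)
    fix \<epsilon> :: real assume "\<epsilon> > 0"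
    then obtain d where d: "d > 0" "\<forall>e. 0 < \<bar>e\<bar> \<and> \<bar>e\<bar> < d \<longrightarrow> \<bar>c + e * G e\<bar> \<le> \<epsilon> * \<bar>e\<bar>^(Suc n)"
      using H[rule_format, OF \<open>\<epsilon>>0\<close>] by blast
    show "\<exists>\<delta>>0. \<forall>e. 0 < \<bar>e\<bar> \<and> \<bar>e\<bar> < \<delta> \<longrightarrow> \<bar>G e\<bar> \<le> \<epsilon> * \<bar>e\<bar>^n"
    proof (intro exI[of _ d] conjI allI impI d(1))
      fix e :: real assume e: "0 < \<bar>e\<bar> \<and> \<bar>e\<bar> < d"
      then have "\<bar>e\<bar> * \<bar>G e\<bar> \<le> \<bar>e\<bar> * (\<epsilon> * \<bar>e\<bar>^n)"
        using d(2)[rule_format, of e] c0 by (simp add: abs_mult mult_ac)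
      then show "\<bar>G e\<bar> \<le> \<epsilon> * \<bar>e\<bar>^n" using e by simp
    qed
  qed
  with c0 show ?thesis by blast
qed

lemma small_P7_zero:
  assumes "small (P7 [c0,c1,c2,c3,c4,c5,c6])"
  shows "c0 = 0 \<and> c1 = 0 \<and> c2 = 0 \<and> c3 = 0 \<and> c4 = 0 \<and> c5 = 0 \<and> c6 = 0"
proof -
  have H0: "\<forall>\<epsilon>>0. \<exists>\<delta>>0. \<forall>e. 0 < \<bar>e\<bar> \<and> \<bar>e\<bar> < \<delta> \<longrightarrow>
     \<bar>c0 + e * (c1 + e * (c2 + e * (c3 + e * (c4 + e * (c5 + e * c6)))))\<bar> \<le> \<epsilon> * \<bar>e\<bar>^(Suc (Suc (Suc (Suc (Suc (Suc 0))))))"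
  proof (intro allI impI)
    fix \<epsilon> :: real assume "\<epsilon> > 0"
    then obtain d where d: "d > 0" "\<forall>e. \<bar>e\<bar> < d \<longrightarrow> \<bar>P7 [c0,c1,c2,c3,c4,c5,c6] e\<bar> \<le> \<epsilon> * \<bar>e\<bar>^6"
      using assms unfolding small_def by blast
    have eq: "P7 [c0,c1,c2,c3,c4,c5,c6] e = c0 + e * (c1 + e * (c2 + e * (c3 + e * (c4 + e * (c5 + e * c6)))))" for e
      by simp algebra
    have six: "Suc (Suc (Suc (Suc (Suc (Suc 0))))) = 6" by simp
    show "\<exists>\<delta>>0. \<forall>e. 0 < \<bar>e\<bar> \<and> \<bar>e\<bar> < \<delta> \<longrightarrow>
     \<bar>c0 + e * (c1 + e * (c2 + e * (c3 + e * (c4 + e * (c5 + e * c6)))))\<bar> \<le> \<epsilon> * \<bar>e\<bar>^(Suc (Suc (Suc (Suc (Suc (Suc 0))))))"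
      unfolding six
    proof (intro exI[of _ d] conjI allI impI d(1))
      fix e :: real assume "0 < \<bar>e\<bar> \<and> \<bar>e\<bar> < d"
      then have "\<bar>P7 [c0,c1,c2,c3,c4,c5,c6] e\<bar> \<le> \<epsilon> * \<bar>e\<bar>^6" using d(2) by blast
      then show "\<bar>c0 + e * (c1 + e * (c2 + e * (c3 + e * (c4 + e * (c5 + e * c6)))))\<bar> \<le> \<epsilon> * \<bar>e\<bar>^6"
        by (simp only: eq)
    qed
  qed
  have "continuous (at 0) (\<lambda>e::real. c1 + e * (c2 + e * (c3 + e * (c4 + e * (c5 + e * c6)))))" by (intro continuous_intros)
  note Z0 = zero_step[OF H0 this]
  have A0: "c0 = 0" using Z0 by (rule conjunct1)
  have H1: "\<forall>\<epsilon>>0. \<exists>\<delta>>0. \<forall>e. 0 < \<bar>e\<bar> \<and> \<bar>e\<bar> < \<delta> \<longrightarrow> \<bar>c1 + e * (c2 + e * (c3 + e * (c4 + e * (c5 + e * c6))))\<bar> \<le> \<epsilon> * \<bar>e\<bar>^(Suc (Suc (Suc (Suc (Suc 0)))))" using Z0 by (rule conjunct2)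
  have "continuous (at 0) (\<lambda>e::real. c2 + e * (c3 + e * (c4 + e * (c5 + e * c6))))" by (intro continuous_intros)
  note Z1 = zero_step[OF H1 this]
  have A1: "c1 = 0" using Z1 by (rule conjunct1)
  have H2: "\<forall>\<epsilon>>0. \<exists>\<delta>>0. \<forall>e. 0 < \<bar>e\<bar> \<and> \<bar>e\<bar> < \<delta> \<longrightarrow> \<bar>c2 + e * (c3 + e * (c4 + e * (c5 + e * c6)))\<bar> \<le> \<epsilon> * \<bar>e\<bar>^(Suc (Suc (Suc (Suc 0))))" using Z1 by (rule conjunct2)
  have "continuous (at 0) (\<lambda>e::real. c3 + e * (c4 + e * (c5 + e * c6)))" by (intro continuous_intros)
  note Z2 = zero_step[OF H2 this]
  have A2: "c2 = 0" using Z2 by (rule conjunct1)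
  have H3: "\<forall>\<epsilon>>0. \<exists>\<delta>>0. \<forall>e. 0 < \<bar>e\<bar> \<and> \<bar>e\<bar> < \<delta> \<longrightarrow> \<bar>c3 + e * (c4 + e * (c5 + e * c6))\<bar> \<le> \<epsilon> * \<bar>e\<bar>^(Suc (Suc (Suc 0)))" using Z2 by (rule conjunct2)
  have "continuous (at 0) (\<lambda>e::real. c4 + e * (c5 + e * c6))" by (intro continuous_intros)
  note Z3 = zero_step[OF H3 this]
  have A3: "c3 = 0" using Z3 by (rule conjunct1)
  have H4: "\<forall>\<epsilon>>0. \<exists>\<delta>>0. \<forall>e. 0 < \<bar>e\<bar> \<and> \<bar>e\<bar> < \<delta> \<longrightarrow> \<bar>c4 + e * (c5 + e * c6)\<bar> \<le> \<epsilon> * \<bar>e\<bar>^(Suc (Suc 0))" using Z3 by (rule conjunct2)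
  have "continuous (at 0) (\<lambda>e::real. c5 + e * c6)" by (intro continuous_intros)
  note Z4 = zero_step[OF H4 this]
  have A4: "c4 = 0" using Z4 by (rule conjunct1)
  have H5: "\<forall>\<epsilon>>0. \<exists>\<delta>>0. \<forall>e. 0 < \<bar>e\<bar> \<and> \<bar>e\<bar> < \<delta> \<longrightarrow> \<bar>c5 + e * c6\<bar> \<le> \<epsilon> * \<bar>e\<bar>^(Suc 0)" using Z4 by (rule conjunct2)
  have "continuous (at 0) (\<lambda>e::real. c6)" by (intro continuous_intros)
  note Z5 = zero_step[OF H5 this]
  have A5: "c5 = 0" using Z5 by (rule conjunct1)
  have H6: "\<forall>\<epsilon>>0. \<exists>\<delta>>0. \<forall>e. 0 < \<bar>e\<bar> \<and> \<bar>e\<bar> < \<delta> \<longrightarrow> \<bar>c6\<bar> \<le> \<epsilon> * \<bar>e\<bar>^0" using Z5 by (rule conjunct2)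
  have A6: "c6 = 0"
  proof (rule ccontr)
    assume "c6 \<noteq> 0"
    then have "\<bar>c6\<bar>/2 > 0" by simp
    then obtain d where d: "d > 0" "\<forall>e. 0 < \<bar>e\<bar> \<and> \<bar>e\<bar> < d \<longrightarrow> \<bar>c6\<bar> \<le> \<bar>c6\<bar>/2 * \<bar>e\<bar>^0"
      using H6 by blast
    then have "\<bar>c6\<bar> \<le> \<bar>c6\<bar>/2" using d(2)[rule_format, of "d/2"] by simp
    with \<open>c6 \<noteq> 0\<close> show False by simp
  qed
  show ?thesis using A0 A1 A2 A3 A4 A5 A6 by blast
qed

lemma expands_unique:
  assumes "expands f [c0,c1,c2,c3,c4,c5,c6]" "expands f [d0,d1,d2,d3,d4,d5,d6]"
  shows "c0 = d0 \<and> c1 = d1 \<and> c2 = d2 \<and> c3 = d3 \<and> c4 = d4 \<and> c5 = d5 \<and> c6 = d6"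
proof -
  have "small (\<lambda>e. (f e - P7 [d0,d1,d2,d3,d4,d5,d6] e) - (f e - P7 [c0,c1,c2,c3,c4,c5,c6] e))"
    using small_diff assms unfolding expands_def by blast
  moreover have "(\<lambda>e. (f e - P7 [d0,d1,d2,d3,d4,d5,d6] e) - (f e - P7 [c0,c1,c2,c3,c4,c5,c6] e))
     = P7 [c0-d0,c1-d1,c2-d2,c3-d3,c4-d4,c5-d5,c6-d6]"
    by (rule ext) (simp add: algebra_simps)
  ultimately have "small (P7 [c0-d0,c1-d1,c2-d2,c3-d3,c4-d4,c5-d5,c6-d6])" by simp
  from small_P7_zero[OF this] show ?thesis by simp
qed


lemma expands_lin2:
  assumes "expands u [u0,u1,u2,u3,u4,u5,u6]" "expands v [v0,v1,v2,v3,v4,v5,v6]"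
  "h0 = \<alpha> * u0 + \<beta> * v0" "h1 = \<alpha> * u1 + \<beta> * v1" "h2 = \<alpha> * u2 + \<beta> * v2" "h3 = \<alpha> * u3 + \<beta> * v3"
  "h4 = \<alpha> * u4 + \<beta> * v4" "h5 = \<alpha> * u5 + \<beta> * v5" "h6 = \<alpha> * u6 + \<beta> * v6"
  shows "expands (\<lambda>e. \<alpha> * u e + \<beta> * v e) [h0,h1,h2,h3,h4,h5,h6]"
  using expands_add[OF expands_scale[OF assms(1), of \<alpha>] expands_scale[OF assms(2), of \<beta>]]
  by (simp add: assms(3-9))

lemma expands_lin3:
  assumes "expands A [A0,A1,A2,A3,A4,A5,A6]" "expands B [B0,B1,B2,B3,B4,B5,B6]" "expands C [C0,C1,C2,C3,C4,C5,C6]"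
  "h0 = k + \<alpha>*A0 + \<beta>*B0 + \<gamma>*C0" "h1 = \<alpha>*A1 + \<beta>*B1 + \<gamma>*C1" "h2 = \<alpha>*A2 + \<beta>*B2 + \<gamma>*C2"
  "h3 = \<alpha>*A3 + \<beta>*B3 + \<gamma>*C3" "h4 = \<alpha>*A4 + \<beta>*B4 + \<gamma>*C4" "h5 = \<alpha>*A5 + \<beta>*B5 + \<gamma>*C5"
  "h6 = \<alpha>*A6 + \<beta>*B6 + \<gamma>*C6"
  shows "expands (\<lambda>e. k + \<alpha> * A e + \<beta> * B e + \<gamma> * C e) [h0,h1,h2,h3,h4,h5,h6]"
  using expands_add[OF expands_add[OF expands_add[OF expands_const[of k] expands_scale[OF assms(1), of \<alpha>]]
     expands_scale[OF assms(2), of \<beta>]] expands_scale[OF assms(3), of \<gamma>]]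
  by (simp add: assms(4-10))

lemma expands_add_small:
  assumes "small r" "expands g c" shows "expands (\<lambda>e. r e + g e) c"
  using small_add[OF assms(1) assms(2)[unfolded expands_def]] unfolding expands_def
  by (simp add: algebra_simps)

definition rep :: "(real \<Rightarrow> real \<Rightarrow> real) \<Rightarrow> (real \<Rightarrow> real) \<Rightarrow> bool" where
  "rep F f \<longleftrightarrow> (\<forall>u>0. \<forall>v>0. F u v = (u + v)/2 * f (((v - u)/2) / ((u + v)/2)))"

lemma expands_pos:
  assumes "expands y [1,w1,w2,w3,w4,w5,w6]" shows "\<exists>r>0. \<forall>e. \<bar>e\<bar> < r \<longrightarrow> y e > 0"
proof -
  obtain r where r: "r > 0" "\<forall>e. \<bar>e\<bar> < r \<longrightarrow> \<bar>y e - 1\<bar> \<le> \<bar>1::real\<bar>/2"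
    using expands_away[OF assms] by auto
  have "y e > 0" if "\<bar>e\<bar> < r" for e
  proof -
    have "\<bar>y e - 1\<bar> \<le> 1/2" using r(2) that by simp
    then show ?thesis by linarith
  qed
  then show ?thesis using r(1) by blast
qed



lemma meanA:
  fixes F :: "real \<Rightarrow> real \<Rightarrow> real" and f mu :: "real \<Rightarrow> real"
  assumes R: "rep F f" and Ef: "expands f [1,0,c1,0,c2,0,c3]" and Emu: "expands mu [1,0,a1,0,a2,0,a3]"
  shows "expands (\<lambda>e. F (1 - e) (mu e)) [(1),(-1/2),(1/2*a1 + 1/4*c1),(1/8*c1 + 1/2*a1*c1),(1/2*a2 + 1/16*c1 + 1/16*c2 + 1/8*a1*c1 + 1/4*a1^2*c1),(1/32*c1 + 3/32*c2 + 1/4*a1*c2 + 1/2*a2*c1 - 1/8*a1^2*c1),(1/2*a3 + 1/64*c1 + 3/32*c2 + 1/64*c3 - 1/32*a1*c1 + 9/32*a1*c2 + 1/8*a2*c1 + 1/2*a1*a2*c1 - 1/8*a1^2*c1 + 3/8*a1^2*c2 - 1/8*a1^3*c1)]"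
proof -
  have Es: "expands (\<lambda>e. 1 - e) [1,-1,0,0,0,0,0]"
  proof -
    have "P7 [1,-1,0,0,0,0,0] = (\<lambda>e. 1 - e)" by (rule ext) simp
    then show ?thesis using expands_P7[of "[1,-1,0,0,0,0,0]"] by simp
  qed
  define x where "x = (\<lambda>e::real. ((1 - e) + (mu e))/2)"
  define d where "d = (\<lambda>e::real. ((mu e) - (1 - e))/2)"
  define q where "q = (\<lambda>e. d e / x e)"
  define q2 where "q2 = (\<lambda>e. q e * q e)"
  define q4 where "q4 = (\<lambda>e. q2 e * q2 e)"
  define q6 where "q6 = (\<lambda>e. q4 e * q2 e)"
  have EX0: "expands (\<lambda>e. (1/2) * (1 - e) + (1/2) * (mu e)) [(1),(-1/2),(1/2*a1),0,(1/2*a2),0,(1/2*a3)]"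
    by (rule expands_lin2[OF Es Emu]) (algebra | simp)+
  have EX: "expands x [(1),(-1/2),(1/2*a1),0,(1/2*a2),0,(1/2*a3)]"
    by (rule expands_cong[OF EX0, where r=1]) (simp_all add: x_def field_simps)
  have ED0: "expands (\<lambda>e. (-1/2) * (1 - e) + (1/2) * (mu e)) [0,(1/2),(1/2*a1),0,(1/2*a2),0,(1/2*a3)]"
    by (rule expands_lin2[OF Es Emu]) (algebra | simp)+
  have ED: "expands d [0,(1/2),(1/2*a1),0,(1/2*a2),0,(1/2*a3)]"
    by (rule expands_cong[OF ED0, where r=1]) (simp_all add: d_def field_simps)
  have EQ: "expands q [0,(1/2),(1/4 + 1/2*a1),(1/8),(1/16 - 1/8*a1 + 1/2*a2 - 1/4*a1^2),(1/32 - 1/8*a1 - 1/8*a1^2),(1/64 - 3/32*a1 - 1/8*a2 + 1/2*a3 - 1/2*a1*a2 + 1/8*a1^3)]"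
    unfolding q_def by (rule expands_div[OF ED EX]) (algebra | simp)+
  have EQ2: "expands q2 [0,0,(1/4),(1/4 + 1/2*a1),(3/16 + 1/4*a1 + 1/4*a1^2),(1/8 + 1/2*a2 - 1/4*a1^2),(5/64 - 1/8*a1 + 1/4*a2 + 1/2*a1*a2 - 3/8*a1^2 - 1/4*a1^3)]"
    unfolding q2_def by (rule expands_mult[OF EQ EQ]) (algebra | simp)+
  have EQ4: "expands q4 [0,0,0,0,(1/16),(1/8 + 1/4*a1),(5/32 + 3/8*a1 + 3/8*a1^2)]"
    unfolding q4_def by (rule expands_mult[OF EQ2 EQ2]) (algebra | simp)+
  have EQ6: "expands q6 [0,0,0,0,0,0,(1/64)]"
    unfolding q6_def by (rule expands_mult[OF EQ4 EQ2]) (algebra | simp)+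
  have EP: "expands (\<lambda>e. 1 + c1 * q2 e + c2 * q4 e + c3 * q6 e) [(1),0,(1/4*c1),(1/4*c1 + 1/2*a1*c1),(3/16*c1 + 1/16*c2 + 1/4*a1*c1 + 1/4*a1^2*c1),(1/8*c1 + 1/8*c2 + 1/4*a1*c2 + 1/2*a2*c1 - 1/4*a1^2*c1),(5/64*c1 + 5/32*c2 + 1/64*c3 - 1/8*a1*c1 + 3/8*a1*c2 + 1/4*a2*c1 + 1/2*a1*a2*c1 - 3/8*a1^2*c1 + 3/8*a1^2*c2 - 1/4*a1^3*c1)]"
    by (rule expands_lin3[OF EQ2 EQ4 EQ6]) (algebra | simp)+
  have SM: "small (\<lambda>e. f (q e) - P7 [1,0,c1,0,c2,0,c3] (q e))"
    by (rule expands_comp[OF Ef EQ])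
  have EF0: "expands (\<lambda>e. (f (q e) - P7 [1,0,c1,0,c2,0,c3] (q e)) + (1 + c1 * q2 e + c2 * q4 e + c3 * q6 e)) [(1),0,(1/4*c1),(1/4*c1 + 1/2*a1*c1),(3/16*c1 + 1/16*c2 + 1/4*a1*c1 + 1/4*a1^2*c1),(1/8*c1 + 1/8*c2 + 1/4*a1*c2 + 1/2*a2*c1 - 1/4*a1^2*c1),(5/64*c1 + 5/32*c2 + 1/64*c3 - 1/8*a1*c1 + 3/8*a1*c2 + 1/4*a2*c1 + 1/2*a1*a2*c1 - 3/8*a1^2*c1 + 3/8*a1^2*c2 - 1/4*a1^3*c1)]"
    by (rule expands_add_small[OF SM EP])
  have EF: "expands (\<lambda>e. f (q e)) [(1),0,(1/4*c1),(1/4*c1 + 1/2*a1*c1),(3/16*c1 + 1/16*c2 + 1/4*a1*c1 + 1/4*a1^2*c1),(1/8*c1 + 1/8*c2 + 1/4*a1*c2 + 1/2*a2*c1 - 1/4*a1^2*c1),(5/64*c1 + 5/32*c2 + 1/64*c3 - 1/8*a1*c1 + 3/8*a1*c2 + 1/4*a2*c1 + 1/2*a1*a2*c1 - 3/8*a1^2*c1 + 3/8*a1^2*c2 - 1/4*a1^3*c1)]"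
    by (rule expands_cong[OF EF0, where r=1]) (simp_all add: q2_def q4_def q6_def, algebra)
  have EY: "expands (\<lambda>e. x e * f (q e)) [(1),(-1/2),(1/2*a1 + 1/4*c1),(1/8*c1 + 1/2*a1*c1),(1/2*a2 + 1/16*c1 + 1/16*c2 + 1/8*a1*c1 + 1/4*a1^2*c1),(1/32*c1 + 3/32*c2 + 1/4*a1*c2 + 1/2*a2*c1 - 1/8*a1^2*c1),(1/2*a3 + 1/64*c1 + 3/32*c2 + 1/64*c3 - 1/32*a1*c1 + 9/32*a1*c2 + 1/8*a2*c1 + 1/2*a1*a2*c1 - 1/8*a1^2*c1 + 3/8*a1^2*c2 - 1/8*a1^3*c1)]"
    by (rule expands_mult[OF EX EF]) (algebra | simp)+
  obtain r where r: "r > 0" "\<forall>e. \<bar>e\<bar> < r \<longrightarrow> mu e > 0" using expands_pos[OF Emu] by blast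
  show ?thesis
  proof (rule expands_cong[OF EY, of "min r 1"])
    fix e :: real assume e: "\<bar>e\<bar> < min r 1"
    then have "mu e > 0" "1 - e > 0" using r by auto
    then show "x e * f (q e) = F (1 - e) (mu e)"
      using R unfolding rep_def q_def x_def d_def by auto
  qed (use r in auto)
qed


lemma meanB:
  fixes F :: "real \<Rightarrow> real \<Rightarrow> real" and f y :: "real \<Rightarrow> real"
  assumes R: "rep F f" and Ef: "expands f [1,0,c1,0,c2,0,c3]" and Ey: "expands y [1,w1,w2,w3,w4,w5,w6]"
  shows "expands (\<lambda>e. F (y e) (y (-e))) [(1),0,(w2 + c1*w1^2),0,(w4 + 2*c1*w1*w3 - c1*w1^2*w2 + c2*w1^4),0,(w6 + 2*c1*w1*w5 + c1*w3^2 - 2*c1*w1*w2*w3 - c1*w1^2*w4 + c1*w1^2*w2^2 + 4*c2*w1^3*w3 - 3*c2*w1^4*w2 + c3*w1^6)]"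
proof -
  have Ey': "expands (\<lambda>e. y (-e)) [1,-w1,w2,-w3,w4,-w5,w6]" by (rule expands_refl[OF Ey, simplified])
  define x where "x = (\<lambda>e::real. ((y e) + (y (-e)))/2)"
  define d where "d = (\<lambda>e::real. ((y (-e)) - (y e))/2)"
  define q where "q = (\<lambda>e. d e / x e)"
  define q2 where "q2 = (\<lambda>e. q e * q e)"
  define q4 where "q4 = (\<lambda>e. q2 e * q2 e)"
  define q6 where "q6 = (\<lambda>e. q4 e * q2 e)"
  have EX0: "expands (\<lambda>e. (1/2) * (y e) + (1/2) * (y (-e))) [(1),0,(w2),0,(w4),0,(w6)]"
    by (rule expands_lin2[OF Ey Ey']) (algebra | simp)+
  have EX: "expands x [(1),0,(w2),0,(w4),0,(w6)]"
    by (rule expands_cong[OF EX0, where r=1]) (simp_all add: x_def field_simps)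
  have ED0: "expands (\<lambda>e. (-1/2) * (y e) + (1/2) * (y (-e))) [0,(-w1),0,(-w3),0,(-w5),0]"
    by (rule expands_lin2[OF Ey Ey']) (algebra | simp)+
  have ED: "expands d [0,(-w1),0,(-w3),0,(-w5),0]"
    by (rule expands_cong[OF ED0, where r=1]) (simp_all add: d_def field_simps)
  have EQ: "expands q [0,(-w1),0,(-w3 + w1*w2),0,(-w5 + w1*w4 + w2*w3 - w1*w2^2),0]"
    unfolding q_def by (rule expands_div[OF ED EX]) (algebra | simp)+
  have EQ2: "expands q2 [0,0,(w1^2),0,(2*w1*w3 - 2*w1^2*w2),0,(2*w1*w5 + w3^2 - 4*w1*w2*w3 - 2*w1^2*w4 + 3*w1^2*w2^2)]"
    unfolding q2_def by (rule expands_mult[OF EQ EQ]) (algebra | simp)+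
  have EQ4: "expands q4 [0,0,0,0,(w1^4),0,(4*w1^3*w3 - 4*w1^4*w2)]"
    unfolding q4_def by (rule expands_mult[OF EQ2 EQ2]) (algebra | simp)+
  have EQ6: "expands q6 [0,0,0,0,0,0,(w1^6)]"
    unfolding q6_def by (rule expands_mult[OF EQ4 EQ2]) (algebra | simp)+
  have EP: "expands (\<lambda>e. 1 + c1 * q2 e + c2 * q4 e + c3 * q6 e) [(1),0,(c1*w1^2),0,(2*c1*w1*w3 - 2*c1*w1^2*w2 + c2*w1^4),0,(2*c1*w1*w5 + c1*w3^2 - 4*c1*w1*w2*w3 - 2*c1*w1^2*w4 + 3*c1*w1^2*w2^2 + 4*c2*w1^3*w3 - 4*c2*w1^4*w2 + c3*w1^6)]"
    by (rule expands_lin3[OF EQ2 EQ4 EQ6]) (algebra | simp)+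
  have SM: "small (\<lambda>e. f (q e) - P7 [1,0,c1,0,c2,0,c3] (q e))"
    by (rule expands_comp[OF Ef EQ])
  have EF0: "expands (\<lambda>e. (f (q e) - P7 [1,0,c1,0,c2,0,c3] (q e)) + (1 + c1 * q2 e + c2 * q4 e + c3 * q6 e)) [(1),0,(c1*w1^2),0,(2*c1*w1*w3 - 2*c1*w1^2*w2 + c2*w1^4),0,(2*c1*w1*w5 + c1*w3^2 - 4*c1*w1*w2*w3 - 2*c1*w1^2*w4 + 3*c1*w1^2*w2^2 + 4*c2*w1^3*w3 - 4*c2*w1^4*w2 + c3*w1^6)]"
    by (rule expands_add_small[OF SM EP])
  have EF: "expands (\<lambda>e. f (q e)) [(1),0,(c1*w1^2),0,(2*c1*w1*w3 - 2*c1*w1^2*w2 + c2*w1^4),0,(2*c1*w1*w5 + c1*w3^2 - 4*c1*w1*w2*w3 - 2*c1*w1^2*w4 + 3*c1*w1^2*w2^2 + 4*c2*w1^3*w3 - 4*c2*w1^4*w2 + c3*w1^6)]"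
    by (rule expands_cong[OF EF0, where r=1]) (simp_all add: q2_def q4_def q6_def, algebra)
  have EY: "expands (\<lambda>e. x e * f (q e)) [(1),0,(w2 + c1*w1^2),0,(w4 + 2*c1*w1*w3 - c1*w1^2*w2 + c2*w1^4),0,(w6 + 2*c1*w1*w5 + c1*w3^2 - 2*c1*w1*w2*w3 - c1*w1^2*w4 + c1*w1^2*w2^2 + 4*c2*w1^3*w3 - 3*c2*w1^4*w2 + c3*w1^6)]"
    by (rule expands_mult[OF EX EF]) (algebra | simp)+
  obtain r where r: "r > 0" "\<forall>e. \<bar>e\<bar> < r \<longrightarrow> y e > 0" using expands_pos[OF Ey] by blast
  show ?thesis
  proof (rule expands_cong[OF EY, where r=r])
    fix e :: real assume e: "\<bar>e\<bar> < r"
    then have "y e > 0" "y (-e) > 0" using r by auto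
    then show "x e * f (q e) = F (y e) (y (-e))"
      using R unfolding rep_def q_def x_def d_def by auto
  qed (use r in auto)
qed




lemma rep_hom:
  assumes "homogeneous_mean M" shows "rep M (\<lambda>e. M (1 - e) (1 + e))"
  unfolding rep_def
proof (intro allI impI)
  fix u v :: real assume u: "u > 0" and v: "v > 0"
  define x where "x = (u+v)/2"
  define q where "q = ((v-u)/2)/x"
  have xpos: "x > 0" using u v by (simp add: x_def)
  have h1: "x * (1 - q) = u" using xpos by (simp add: q_def x_def field_simps)
  have h2: "x * (1 + q) = v" using xpos by (simp add: q_def x_def field_simps)
  have p1: "1 - q > 0" using h1 xpos u by (metis zero_less_mult_pos)
  have p2: "1 + q > 0" using h2 xpos v by (metis zero_less_mult_pos)
  have "M (x * (1-q)) (x * (1+q)) = x * M (1-q) (1+q)"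
    using assms xpos p1 p2 unfolding homogeneous_mean_def by blast
  then have "M u v = x * M (1-q) (1+q)" by (simp only: h1 h2)
  then show "M u v = (u + v)/2 * M (1 - ((v-u)/2)/((u+v)/2)) (1 + ((v-u)/2)/((u+v)/2))"
    by (simp add: x_def q_def)
qed

lemma rep_sym:
  assumes R: "rep F f" and ev: "\<And>e. \<bar>e\<bar> < 1 \<Longrightarrow> f (-e) = f e" and s: "s > 0" and t: "t > 0"
  shows "F s t = F t s"
proof -
  define q where "q = ((t-s)/2)/((s+t)/2)"
  have st: "s + t > 0" using s t by simp
  have qe: "q = (t - s)/(s + t)" unfolding q_def using st by (simp add: field_simps)
  have "\<bar>t - s\<bar> < s + t" using s t by (simp add: abs_less_iff)
  then have q1: "\<bar>q\<bar> < 1" unfolding qe using st by (simp add: abs_divide)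
  have q2: "((s-t)/2)/((t+s)/2) = - q" unfolding qe using st by (simp add: field_simps)
  have "F s t = (s+t)/2 * f q" using R s t unfolding rep_def q_def by simp
  moreover have "F t s = (t+s)/2 * f (- q)" using R s t q2 unfolding rep_def by simp
  ultimately show ?thesis using ev[OF q1] by (simp add: add.commute)
qed

lemma expands_of_right:
  assumes L: "(\<lambda>e. f e - P7 [c0,0,c2,0,c4,0,c6] e) \<in> o[at_right 0](\<lambda>e. e^6)"
    and ev: "\<And>e. \<bar>e\<bar> < 1 \<Longrightarrow> f (-e) = f e" and f0: "f 0 = c0"
  shows "expands f [c0,0,c2,0,c4,0,c6]"
  unfolding expands_def small_def
proof (intro allI impI)
  fix \<epsilon> :: real assume ep: "\<epsilon> > 0"
  have "eventually (\<lambda>e. norm (f e - P7 [c0,0,c2,0,c4,0,c6] e) \<le> \<epsilon> * norm (e^6)) (at_right (0::real))"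
    by (rule landau_o.smallD[OF L ep])
  then obtain b where b: "b > 0" "\<forall>y>0. y < b \<longrightarrow> \<bar>f y - P7 [c0,0,c2,0,c4,0,c6] y\<bar> \<le> \<epsilon> * \<bar>y^6\<bar>"
    unfolding eventually_at_right_field by auto
  have "\<bar>f e - P7 [c0,0,c2,0,c4,0,c6] e\<bar> \<le> \<epsilon> * \<bar>e\<bar>^6" if e: "\<bar>e\<bar> < min b 1" for e
  proof (cases "e > 0")
    case True
    then show ?thesis using b e by (simp add: power_abs)
  next
    case False
    show ?thesis
    proof (cases "e = 0")
      case True then show ?thesis using f0 by simp
    next
      case False
      with \<open>\<not> e > 0\<close> have "-e > 0" by simp
      moreover have "-e < b" using e by (auto simp: abs_less_iff)
      ultimately have "\<bar>f (-e) - P7 [c0,0,c2,0,c4,0,c6] (-e)\<bar> \<le> \<epsilon> * \<bar>(-e)^6\<bar>" using b by blast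
      moreover have "f (-e) = f e" using ev e by simp
      moreover have "P7 [c0,0,c2,0,c4,0,c6] (-e) = P7 [c0,0,c2,0,c4,0,c6] e" by simp
      ultimately show ?thesis by (simp add: power_abs)
    qed
  qed
  then show "\<exists>\<delta>>0. \<forall>e. \<bar>e\<bar> < \<delta> \<longrightarrow> \<bar>f e - P7 [c0,0,c2,0,c4,0,c6] e\<bar> \<le> \<epsilon> * \<bar>e\<bar>^6"
    using b(1) by (intro exI[of _ "min b 1"]) auto
qed

lemma sum_le3: "(\<Sum>n\<le>(3::nat). h n) = h 0 + h 1 + h 2 + h 3" for h :: "nat \<Rightarrow> real"
  by (simp add: eval_nat_numeral atMost_Suc)

lemma powr_odd: assumes "x > 0" shows "x powr (1 - 2 * real n) = x / x^(2*n)"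
proof -
  have "x powr (1 - 2 * real n) = x powr 1 / x powr (real (2*n))" by (simp add: powr_diff)
  also have "\<dots> = x / x^(2*n)" using powr_realpow[OF assms, of "2*n"] assms by simp
  finally show ?thesis .
qed

lemma good_right:
  assumes hom: "homogeneous_mean M" and H: "has_sym_asymp_expansion M a"
  shows "(\<lambda>e. M (1 - e) (1 + e) - P7 [a 0, 0, a 1, 0, a 2, 0, a 3] e) \<in> o[at_right 0](\<lambda>e. e^6)"
proof (rule landau_o.smallI)
  fix c :: real assume c: "c > 0"
  have L: "(\<lambda>x. M (x - 1) (x + 1) - (\<Sum>n\<le>3. a n * 1 ^ (2 * n) * x powr (1 - 2 * real n)))
     \<in> o[at_top](\<lambda>x. x powr (1 - 2 * real (3::nat)))"
    using H unfolding has_sym_asymp_expansion_def by blast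
  from landau_o.smallD[OF L c] obtain X where X: "\<forall>x\<ge>X. norm (M (x - 1) (x + 1) - (\<Sum>n\<le>3. a n * 1 ^ (2 * n) * x powr (1 - 2 * real n))) \<le> c * norm (x powr (1 - 2 * real (3::nat)))"
    unfolding eventually_at_top_linorder by blast
  have main: "\<bar>M (1 - e) (1 + e) - P7 [a 0, 0, a 1, 0, a 2, 0, a 3] e\<bar> \<le> c * \<bar>e^6\<bar>"
    if e0: "0 < e" and eb: "e < 1 / max X 1" for e
  proof -
    define x where "x = 1/e"
    define B where "B = max X 1"
    have BX: "B \<ge> X" and B1: "B \<ge> 1" by (simp_all add: B_def)
    have Bpos: "B > 0" using B1 by simp
    have "e * B < 1" using eb Bpos unfolding B_def[symmetric] by (simp add: pos_less_divide_eq)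
    then have xgt: "B < x" using e0 unfolding x_def by (simp add: pos_less_divide_eq mult.commute)
    then have xX: "x \<ge> X" and x1: "x > 1" using BX B1 by auto
    have xpos: "x > 0" using x1 by simp
    have xe: "x * e = 1" using e0 by (simp add: x_def)
    have e1: "e < 1" using x1 e0 by (simp add: x_def)
    have Mx: "M (x - 1) (x + 1) = x * M (1 - e) (1 + e)"
    proof -
      have "M (x * (1 - e)) (x * (1 + e)) = x * M (1 - e) (1 + e)"
        using hom xpos e1 e0 unfolding homogeneous_mean_def by simp
      moreover have "x * (1 - e) = x - 1" "x * (1 + e) = x + 1" using xe by (simp_all add: algebra_simps)
      ultimately show ?thesis by simp
    qed
    have pw: "x powr (1 - 2 * real n) = x / x^(2*n)" for n using powr_odd[OF xpos] .
    have S: "(\<Sum>n\<le>3. a n * 1 ^ (2 * n) * x powr (1 - 2 * real n)) = a 0 * x + a 1 * e + a 2 * e^3 + a 3 * e^5"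
      unfolding sum_le3 pw using e0 by (simp add: x_def field_simps eval_nat_numeral)
    have P: "x powr (1 - 2 * real (3::nat)) = e^5"
      unfolding pw using e0 by (simp add: x_def field_simps eval_nat_numeral)
    have "\<bar>x * M (1 - e) (1 + e) - (a 0 * x + a 1 * e + a 2 * e^3 + a 3 * e^5)\<bar> \<le> c * \<bar>e^5\<bar>"
      using X[rule_format, OF xX] unfolding Mx S P by simp
    moreover have "x * M (1 - e) (1 + e) - (a 0 * x + a 1 * e + a 2 * e^3 + a 3 * e^5)
       = x * (M (1 - e) (1 + e) - P7 [a 0, 0, a 1, 0, a 2, 0, a 3] e)"
      using e0 by (simp add: x_def field_simps eval_nat_numeral) 
    ultimately have xD: "x * \<bar>M (1 - e) (1 + e) - P7 [a 0, 0, a 1, 0, a 2, 0, a 3] e\<bar> \<le> c * \<bar>e^5\<bar>"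
      using xpos by (simp add: abs_mult)
    define D where "D = \<bar>M (1 - e) (1 + e) - P7 [a 0, 0, a 1, 0, a 2, 0, a 3] e\<bar>"
    have e5: "\<bar>e^5\<bar> = e^5" using e0 by simp
    have xD': "x * D \<le> c * e^5" using xD unfolding D_def[symmetric] e5 .
    have "D = e * (x * D)" using xe by algebra
    also have "\<dots> \<le> e * (c * e^5)" using xD' e0 by (simp add: mult_left_mono)
    also have "\<dots> = c * e^6" by algebra
    finally have "D \<le> c * e^6" .
    then show ?thesis unfolding D_def by simp
  qed
  show "eventually (\<lambda>e. norm (M (1 - e) (1 + e) - P7 [a 0, 0, a 1, 0, a 2, 0, a 3] e) \<le> c * norm (e^6)) (at_right 0)"
    unfolding eventually_at_right_field
    by (rule exI[of _ "1 / max X 1"]) (use main in auto)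
qed

lemma a0_one:
  assumes M: "is_mean M" and L: "(\<lambda>e. M (1 - e) (1 + e) - P7 [c0,0,c2,0,c4,0,c6] e) \<in> o[at_right 0](\<lambda>e. e^6)"
  shows "c0 = 1"
proof -
  have ev: "eventually (\<lambda>e. norm (M (1 - e) (1 + e) - P7 [c0,0,c2,0,c4,0,c6] e) \<le> 1 * norm (e^6)) (at_right (0::real))"
    by (rule landau_o.smallD[OF L]) simp
  have "((\<lambda>e::real. e^6) \<longlongrightarrow> 0) (at_right 0)" by real_asymp
  then have "((\<lambda>e::real. norm (e^6)) \<longlongrightarrow> 0) (at_right 0)" by (rule tendsto_norm_zero)
  then have t6: "((\<lambda>e::real. 1 * norm (e^6)) \<longlongrightarrow> 0) (at_right 0)" by simp
  have l1: "((\<lambda>e. M (1 - e) (1 + e) - P7 [c0,0,c2,0,c4,0,c6] e) \<longlongrightarrow> 0) (at_right 0)"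
    by (rule Lim_null_comparison[OF ev t6])
  have bnd: "1 - e \<le> M (1 - e) (1 + e) \<and> M (1 - e) (1 + e) \<le> 1 + e" if "0 < e" "e < 1" for e
  proof -
    have h: "\<forall>s>0. \<forall>t>0. min s t \<le> M s t \<and> M s t \<le> max s t" using M unfolding is_mean_def .
    have "min (1 - e) (1 + e) \<le> M (1 - e) (1 + e) \<and> M (1 - e) (1 + e) \<le> max (1 - e) (1 + e)"
      using h[rule_format, of "1 - e" "1 + e"] that by simp
    moreover have "min (1 - e) (1 + e) = 1 - e" "max (1 - e) (1 + e) = 1 + e" using that by auto
    ultimately show ?thesis by simp
  qed
  have ev1: "eventually (\<lambda>e. 1 - e \<le> M (1 - e) (1 + e)) (at_right (0::real))"
    unfolding eventually_at_right_field by (rule exI[of _ 1]) (use bnd in auto)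
  have ev2: "eventually (\<lambda>e. M (1 - e) (1 + e) \<le> 1 + e) (at_right (0::real))"
    unfolding eventually_at_right_field by (rule exI[of _ 1]) (use bnd in auto)
  have la: "((\<lambda>e::real. 1 - e) \<longlongrightarrow> 1) (at_right 0)" by real_asymp
  have lb: "((\<lambda>e::real. 1 + e) \<longlongrightarrow> 1) (at_right 0)" by real_asymp
  have l2: "((\<lambda>e. M (1 - e) (1 + e)) \<longlongrightarrow> 1) (at_right 0)"
    by (rule tendsto_sandwich[OF ev1 ev2 la lb])
  have "isCont (P7 [c0,0,c2,0,c4,0,c6]) 0" by (rule P7_cont)
  then have "((P7 [c0,0,c2,0,c4,0,c6]) \<longlongrightarrow> P7 [c0,0,c2,0,c4,0,c6] 0) (at 0)" by (simp add: isCont_def)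
  then have l3: "((P7 [c0,0,c2,0,c4,0,c6]) \<longlongrightarrow> c0) (at_right 0)"
    by (simp add: tendsto_mono[OF at_le[OF subset_UNIV]])
  have "((\<lambda>e. M (1 - e) (1 + e) - (M (1 - e) (1 + e) - P7 [c0,0,c2,0,c4,0,c6] e)) \<longlongrightarrow> 1 - 0) (at_right 0)"
    by (rule tendsto_diff[OF l2 l1])
  then have l4: "((P7 [c0,0,c2,0,c4,0,c6]) \<longlongrightarrow> 1) (at_right 0)" by (simp add: P7_fun add.assoc)
  show ?thesis using tendsto_unique[OF _ l3 l4] by simp
qed

lemma good_jet:
  assumes g: "good_mean M" shows "\<exists>a1 a2 a3. expands (\<lambda>e. M (1 - e) (1 + e)) [1,0,a1,0,a2,0,a3]"
proof -
  have mean: "is_mean M" and sym: "symmetric_mean M" and hom: "homogeneous_mean M"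
    using g unfolding good_mean_def by auto
  obtain a where H: "has_sym_asymp_expansion M a" using g unfolding good_mean_def by auto
  note L = good_right[OF hom H]
  have a0: "a 0 = 1" by (rule a0_one[OF mean L])
  have ev: "M (1 - - e) (1 + - e) = M (1 - e) (1 + e)" if "\<bar>e\<bar> < 1" for e
    using sym that unfolding symmetric_mean_def by simp
  have h: "\<forall>s>0. \<forall>t>0. min s t \<le> M s t \<and> M s t \<le> max s t" using mean unfolding is_mean_def .
  have "min 1 1 \<le> M 1 1 \<and> M 1 1 \<le> max (1::real) 1" using h[rule_format, of 1 1] by simp
  then have f0: "M (1 - 0) (1 + 0) = a 0" using a0 by simp
  have "expands (\<lambda>e. M (1 - e) (1 + e)) [a 0,0,a 1,0,a 2,0,a 3]"
    by (rule expands_of_right[OF L]) (use ev f0 in auto)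
  then show ?thesis unfolding a0 by blast
qed

lemma mean_pos: assumes "is_mean M" "s > 0" "t > 0" shows "M s t > 0"
proof -
  have h: "\<forall>s>0. \<forall>t>0. min s t \<le> M s t \<and> M s t \<le> max s t" using assms(1) unfolding is_mean_def .
  have "min s t \<le> M s t" using h[rule_format, of s t] assms(2,3) by simp
  moreover have "min s t > 0" using assms by simp
  ultimately show ?thesis by linarith
qed

lemma stab_coeffs:
  assumes g: "good_mean M" and Em: "expands (\<lambda>e. M (1 - e) (1 + e)) [1,0,a1,0,a2,0,a3]"
  shows "(1/16*a1 - 3/8*a2 - 3/16*a1^2 - 1/4*a1^3) = 0 \<and> (1/64*a1 + 3/32*a2 - 15/32*a3 - 1/32*a1*a2 - 5/64*a1^2 - 1/8*a1^2*a2 + 3/32*a1^3 + 7/16*a1^4 + 1/4*a1^5) = 0"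
proof -
  have mean: "is_mean M" and sym: "symmetric_mean M" and hom: "homogeneous_mean M" and stab: "stable_mean M"
    using g unfolding good_mean_def by auto
  have R: "rep M (\<lambda>e. M (1 - e) (1 + e))" by (rule rep_hom[OF hom])
  note EY = meanA[OF R Em Em]
  note EB = meanB[OF R Em EY]
  have cg: "M (M (1 - e) (M (1 - e) (1 + e))) (M (1 - - e) (M (1 - - e) (1 + - e))) = M (1 - e) (1 + e)"
    if e: "\<bar>e\<bar> < 1" for e
  proof -
    have s: "1 - e > 0" and t: "1 + e > 0" using e by auto
    have m: "M (1 - e) (1 + e) > 0" by (rule mean_pos[OF mean s t])
    have a: "M (1 + e) (1 - e) = M (1 - e) (1 + e)" using sym s t unfolding symmetric_mean_def by simp
    have b: "M (1 + e) (M (1 - e) (1 + e)) = M (M (1 - e) (1 + e)) (1 + e)"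
      using sym t m unfolding symmetric_mean_def by simp
    have "M (1 - e) (1 + e) = M (M (1 - e) (M (1 - e) (1 + e))) (M (M (1 - e) (1 + e)) (1 + e))"
      using stab s t unfolding stable_mean_def by blast
    then show ?thesis using a b by simp
  qed
  note EM2 = expands_cong[where r=1 and g="\<lambda>e. M (1 - e) (1 + e)", OF EB zero_less_one cg]
  from expands_unique[OF Em EM2] show ?thesis by algebra
qed

lemma eq_coeffs:
  assumes gK: "good_mean K" and gM: "good_mean M" and st: "stabilizable N K M"
    and RN: "rep N (\<lambda>e. N (1 - e) (1 + e))" and symN: "\<And>s t. s > 0 \<Longrightarrow> t > 0 \<Longrightarrow> N s t = N t s"
    and En: "expands (\<lambda>e. N (1 - e) (1 + e)) [1,0,n1,0,n2,0,n3]"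
    and Em: "expands (\<lambda>e. M (1 - e) (1 + e)) [1,0,a1,0,a2,0,a3]"
    and Ek: "expands (\<lambda>e. K (1 - e) (1 + e)) [1,0,b1,0,b2,0,b3]"
  shows "(1/2*a1 + 1/4*b1 - 3/4*n1) = 0 \<and> (1/2*a2 + 1/16*b2 + 1/16*n1 - 15/16*n2 - 1/8*a1*b1 + 1/8*a1*n1 - 3/16*b1*n1 - 1/2*a1*b1*n1 + 1/4*a1^2*n1) = 0 \<and> (1/2*a3 + 1/64*b3 + 1/64*n1 + 3/32*n2 - 63/64*n3 - 3/32*a1*b2 - 1/32*a1*n1 + 9/32*a1*n2 - 1/8*a2*b1 + 1/8*a2*n1 - 3/64*b1*n1 - 7/64*b1*n2 - 7/64*b2*n1 + 1/2*a1*a2*n1 + 3/32*a1*b1*n1 - 1/4*a1*b1*n2 - 1/4*a1*b2*n1 + 1/16*a1^2*b1 - 1/8*a1^2*n1 + 3/8*a1^2*n2 - 1/2*a2*b1*n1 + 1/16*b1*n1^2 + 1/4*a1*b1*n1^2 + 5/16*a1^2*b1*n1 - 1/8*a1^3*n1 + 1/4*a1^2*b1*n1^2) = 0"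
proof -
  have mean: "is_mean M" and sym: "symmetric_mean M" using gM unfolding good_mean_def by auto
  have homK: "homogeneous_mean K" using gK unfolding good_mean_def by auto
  have RK: "rep K (\<lambda>e. K (1 - e) (1 + e))" by (rule rep_hom[OF homK])
  note EY = meanA[OF RN En Em]
  note EB = meanB[OF RK Ek EY]
  have cg: "K (N (1 - e) (M (1 - e) (1 + e))) (N (1 - - e) (M (1 - - e) (1 + - e))) = N (1 - e) (1 + e)"
    if e: "\<bar>e\<bar> < 1" for e
  proof -
    have s: "1 - e > 0" and t: "1 + e > 0" using e by auto
    have m: "M (1 - e) (1 + e) > 0" by (rule mean_pos[OF mean s t])
    have a: "M (1 + e) (1 - e) = M (1 - e) (1 + e)" using sym s t unfolding symmetric_mean_def by simp
    have b: "N (1 + e) (M (1 - e) (1 + e)) = N (M (1 - e) (1 + e)) (1 + e)"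
      using symN[OF t m] .
    have "N (1 - e) (1 + e) = K (N (1 - e) (M (1 - e) (1 + e))) (N (M (1 - e) (1 + e)) (1 + e))"
      using st s t unfolding stabilizable_def by blast
    then show ?thesis using a b by simp
  qed
  note EN2 = expands_cong[where r=1 and g="\<lambda>e. N (1 - e) (1 + e)", OF EB zero_less_one cg]
  from expands_unique[OF En EN2] show ?thesis by algebra
qed


lemma NF_val:
  fixes N :: "real \<Rightarrow> real \<Rightarrow> real" and g :: "real \<Rightarrow> real"
  assumes NF: "\<And>s t. N s t = (if s = t then s else (t - s) / (2 * g ((t - s) / (t + s))))"
    and q0: "q \<noteq> 0"
  shows "N (1 - q) (1 + q) = q / g q"
proof -
  have "1 - q \<noteq> 1 + q" using q0 by simp
  then have "N (1 - q) (1 + q) = ((1 + q) - (1 - q)) / (2 * g (((1 + q) - (1 - q)) / ((1 + q) + (1 - q))))"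
    using NF by simp
  also have "((1 + q) - (1 - q)) = 2 * q" by simp
  also have "((1 + q) + (1 - q)) = 2" by simp
  finally show ?thesis by simp
qed

lemma NF_rep:
  fixes N :: "real \<Rightarrow> real \<Rightarrow> real" and g :: "real \<Rightarrow> real"
  assumes NF: "\<And>s t. N s t = (if s = t then s else (t - s) / (2 * g ((t - s) / (t + s))))"
  shows "rep N (\<lambda>e. N (1 - e) (1 + e))"
  unfolding rep_def
proof (intro allI impI)
  fix u v :: real assume u: "u > 0" and v: "v > 0"
  define q where "q = ((v - u)/2)/((u + v)/2)"
  have q': "q = (v - u)/(v + u)" using u v unfolding q_def by (simp add: field_simps)
  have "N u v = (u + v)/2 * N (1 - q) (1 + q)"
  proof (cases "u = v")
    case True
    then have "q = 0" by (simp add: q_def)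
    then show ?thesis using True NF by simp
  next
    case False
    then have "v - u \<noteq> 0" by simp
    moreover have "v + u > 0" using u v by simp
    ultimately have q0: "q \<noteq> 0" unfolding q' by simp
    have A: "N (1 - q) (1 + q) = q / g q" by (rule NF_val[OF NF q0])
    have B: "N u v = (v - u) / (2 * g q)" using False NF unfolding q' by simp
    have C1: "(u + v)/2 * q = (v - u)/2" unfolding q' using u v by (simp add: field_simps)
    have "(u + v)/2 * (q / g q) = ((u + v)/2 * q) / g q" by simp
    also have "\<dots> = ((v - u)/2) / g q" by (simp only: C1)
    also have "\<dots> = (v - u) / (2 * g q)" by simp
    finally have C: "(u + v)/2 * (q / g q) = (v - u) / (2 * g q)" .
    show ?thesis by (simp only: A B C)
  qed
  then show "N u v = (u + v)/2 * N (1 - ((v - u)/2)/((u + v)/2)) (1 + ((v - u)/2)/((u + v)/2))"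
    by (simp add: q_def)
qed

lemma NF_even:
  fixes N :: "real \<Rightarrow> real \<Rightarrow> real" and g :: "real \<Rightarrow> real"
  assumes NF: "\<And>s t. N s t = (if s = t then s else (t - s) / (2 * g ((t - s) / (t + s))))"
    and odd: "\<And>y. \<bar>y\<bar> < 1 \<Longrightarrow> g (-y) = - g y" and e: "\<bar>e\<bar> < 1"
  shows "N (1 - - e) (1 + - e) = N (1 - e) (1 + e)"
proof (cases "e = 0")
  case True then show ?thesis by simp
next
  case False
  have "N (1 - - e) (1 + - e) = (-e) / g (-e)" using NF_val[OF NF, of "-e"] False by simp
  also have "\<dots> = e / g e" using odd[OF e] by simp
  also have "\<dots> = N (1 - e) (1 + e)" using NF_val[OF NF False] by simp
  finally show ?thesis .
qed

lemma NF_jet: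
  fixes N :: "real \<Rightarrow> real \<Rightarrow> real" and g :: "real \<Rightarrow> real"
  assumes NF: "\<And>s t. N s t = (if s = t then s else (t - s) / (2 * g ((t - s) / (t + s))))"
    and odd: "\<And>y. \<bar>y\<bar> < 1 \<Longrightarrow> g (-y) = - g y"
    and L: "(\<lambda>e. e / g e - P7 [1,0,c2,0,c4,0,c6] e) \<in> o[at_right 0](\<lambda>e. e^6)"
  shows "expands (\<lambda>e. N (1 - e) (1 + e)) [1,0,c2,0,c4,0,c6]"
proof (rule expands_of_right)
  have "e / g e - P7 [1,0,c2,0,c4,0,c6] e = N (1 - e) (1 + e) - P7 [1,0,c2,0,c4,0,c6] e" if "e > 0" for e
    using NF_val[OF NF, of e] that by simp
  then have ev: "eventually (\<lambda>e. e / g e - P7 [1,0,c2,0,c4,0,c6] e = N (1 - e) (1 + e) - P7 [1,0,c2,0,c4,0,c6] e) (at_right (0::real))"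
    unfolding eventually_at_right_field by (intro exI[of _ 1]) simp
  show "(\<lambda>e. N (1 - e) (1 + e) - P7 [1,0,c2,0,c4,0,c6] e) \<in> o[at_right 0](\<lambda>e. e^6)"
    by (rule landau_o.small.in_cong[OF ev, THEN iffD1, OF L])
  show "N (1 - - e) (1 + - e) = N (1 - e) (1 + e)" if "\<bar>e\<bar> < 1" for e
    by (rule NF_even[OF NF odd that])
  show "N (1 - 0) (1 + 0) = 1" using NF by simp
qed

lemma NF_sym:
  fixes N :: "real \<Rightarrow> real \<Rightarrow> real" and g :: "real \<Rightarrow> real"
  assumes NF: "\<And>s t. N s t = (if s = t then s else (t - s) / (2 * g ((t - s) / (t + s))))"
    and odd: "\<And>y. \<bar>y\<bar> < 1 \<Longrightarrow> g (-y) = - g y" and "s > 0" "t > 0"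
  shows "N s t = N t s"
  by (rule rep_sym[OF NF_rep[OF NF] _ assms(3,4)]) (use NF_even[OF NF odd] in simp)

lemma no_stab:
  assumes RN: "rep N (\<lambda>e. N (1 - e) (1 + e))" and symN: "\<And>s t. s > 0 \<Longrightarrow> t > 0 \<Longrightarrow> N s t = N t s"
    and En: "expands (\<lambda>e. N (1 - e) (1 + e)) [1,0,n1,0,n2,0,n3]"
    and contra: "\<And>a1 a2 a3 b1 b2 b3 :: real. (1/16*a1 - 3/8*a2 - 3/16*a1^2 - 1/4*a1^3) = 0 \<Longrightarrow> (1/64*a1 + 3/32*a2 - 15/32*a3 - 1/32*a1*a2 - 5/64*a1^2 - 1/8*a1^2*a2 + 3/32*a1^3 + 7/16*a1^4 + 1/4*a1^5) = 0 \<Longrightarrow> (1/16*b1 - 3/8*b2 - 3/16*b1^2 - 1/4*b1^3) = 0 \<Longrightarrow> (1/64*b1 + 3/32*b2 - 15/32*b3 - 1/32*b1*b2 - 5/64*b1^2 - 1/8*b1^2*b2 + 3/32*b1^3 + 7/16*b1^4 + 1/4*b1^5) = 0 \<Longrightarrow> (1/2*a1 + 1/4*b1 - 3/4*n1) = 0 \<Longrightarrow> (1/2*a2 + 1/16*b2 + 1/16*n1 - 15/16*n2 - 1/8*a1*b1 + 1/8*a1*n1 - 3/16*b1*n1 - 1/2*a1*b1*n1 + 1/4*a1^2*n1) = 0 \<Longrightarrow> (1/2*a3 + 1/64*b3 + 1/64*n1 + 3/32*n2 - 63/64*n3 - 3/32*a1*b2 - 1/32*a1*n1 + 9/32*a1*n2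 - 1/8*a2*b1 + 1/8*a2*n1 - 3/64*b1*n1 - 7/64*b1*n2 - 7/64*b2*n1 + 1/2*a1*a2*n1 + 3/32*a1*b1*n1 - 1/4*a1*b1*n2 - 1/4*a1*b2*n1 + 1/16*a1^2*b1 - 1/8*a1^2*n1 + 3/8*a1^2*n2 - 1/2*a2*b1*n1 + 1/16*b1*n1^2 + 1/4*a1*b1*n1^2 + 5/16*a1^2*b1*n1 - 1/8*a1^3*n1 + 1/4*a1^2*b1*n1^2) = 0 \<Longrightarrow> False"
  shows "\<not> (\<exists>K M. good_mean K \<and> good_mean M \<and> stabilizable N K M)"
proof
  assume "\<exists>K M. good_mean K \<and> good_mean M \<and> stabilizable N K M"
  then obtain K M where gK: "good_mean K" and gM: "good_mean M" and st: "stabilizable N K M" by blast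
  obtain a1 a2 a3 where Em: "expands (\<lambda>e. M (1 - e) (1 + e)) [1,0,a1,0,a2,0,a3]" using good_jet[OF gM] by blast
  obtain b1 b2 b3 where Ek: "expands (\<lambda>e. K (1 - e) (1 + e)) [1,0,b1,0,b2,0,b3]" using good_jet[OF gK] by blast
  note SA = stab_coeffs[OF gM Em]
  note SB = stab_coeffs[OF gK Ek]
  note EQ = eq_coeffs[OF gK gM st RN symN En Em Ek]
  show False using contra[of a1 a2 a3 b1 b2 b3] SA SB EQ by blast
qed

lemma P_NF: "seiffert_P s t = (if s = t then s else (t - s) / (2 * arcsin ((t - s) / (t + s))))"
  by (simp add: seiffert_P_def)
lemma T_NF: "seiffert_T s t = (if s = t then s else (t - s) / (2 * arctan ((t - s) / (t + s))))"
  by (simp add: seiffert_T_def)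
lemma NS_NF: "neuman_sandor s t = (if s = t then s else (t - s) / (2 * arsinh ((t - s) / (t + s))))"
  by (simp add: neuman_sandor_def)

lemma P_odd: "\<bar>y\<bar> < 1 \<Longrightarrow> arcsin (-y) = - arcsin y" by (rule arcsin_minus) auto
lemma T_odd: "\<bar>y\<bar> < 1 \<Longrightarrow> arctan (-y) = - arctan y" by (rule arctan_minus)
lemma NS_odd: "\<bar>y::real\<bar> < 1 \<Longrightarrow> arsinh (-y) = - arsinh y" by simp

lemma P_asy: "(\<lambda>e::real. e / arcsin e - P7 [1,0,-1/6,0,-17/360,0,-367/15120] e) \<in> o[at_right 0](\<lambda>e. e^6)"
proof -
  have L: "(\<lambda>e::real. e / arctan (e / sqrt (1 - e^2)) - P7 [1,0,-1/6,0,-17/360,0,-367/15120] e) \<in> o[at_right 0](\<lambda>e. e^6)"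
    by (simp only: P7.simps) real_asymp
  have "eventually (\<lambda>e::real. e / arctan (e / sqrt (1 - e^2)) - P7 [1,0,-1/6,0,-17/360,0,-367/15120] e = e / arcsin e - P7 [1,0,-1/6,0,-17/360,0,-367/15120] e) (at_right 0)"
    unfolding eventually_at_right_field by (rule exI[of _ 1]) (auto simp: arcsin_arctan)
  then show ?thesis by (rule landau_o.small.in_cong[THEN iffD1, OF _ L])
qed

lemma T_asy: "(\<lambda>e::real. e / arctan e - P7 [1,0,1/3,0,-4/45,0,44/945] e) \<in> o[at_right 0](\<lambda>e. e^6)"
  by (simp only: P7.simps) real_asymp

lemma NS_asy: "(\<lambda>e::real. e / arsinh e - P7 [1,0,1/6,0,-17/360,0,367/15120] e) \<in> o[at_right 0](\<lambda>e. e^6)"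
  unfolding arsinh_real_def by (simp only: P7.simps) real_asymp

lemma P_contra:
  fixes a1 a2 a3 b1 b2 b3 :: real
  shows "(1/16*a1 - 3/8*a2 - 3/16*a1^2 - 1/4*a1^3) = 0 \<Longrightarrow> (1/64*a1 + 3/32*a2 - 15/32*a3 - 1/32*a1*a2 - 5/64*a1^2 - 1/8*a1^2*a2 + 3/32*a1^3 + 7/16*a1^4 + 1/4*a1^5) = 0 \<Longrightarrow> (1/16*b1 - 3/8*b2 - 3/16*b1^2 - 1/4*b1^3) = 0 \<Longrightarrow> (1/64*b1 + 3/32*b2 - 15/32*b3 - 1/32*b1*b2 - 5/64*b1^2 - 1/8*b1^2*b2 + 3/32*b1^3 + 7/16*b1^4 + 1/4*b1^5) = 0 \<Longrightarrow> (1/2*a1 + 1/4*b1 - 3/4*(-1/6)) = 0 \<Longrightarrow> (1/2*a2 + 1/16*b2 + 1/16*(-1/6) - 15/16*(-17/360) - 1/8*a1*b1 + 1/8*a1*(-1/6) - 3/16*b1*(-1/6) - 1/2*a1*b1*(-1/6) + 1/4*a1^2*(-1/6)) = 0 \<Longrightarrow> (1/2*a3 + 1/64*b3 + 1/64*(-1/6) + 3/32*(-17/360) - 63/64*(-367/15120) - 3/32*a1*b2 - 1/32*a1*(-1/6) + 9/32*a1*(-17/360) - 1/8*a2*b1 + 1/8*a2*(-1/6) - 3/64*b1*(-1/6) - 7/64*b1*(-17/360) - 7/64*b2*(-1/6) + 1/2*a1*a2*(-1/6) + 3/32*a1*b1*(-1/6) - 1/4*a1*b1*(-17/360) - 1/4*a1*b2*(-1/6)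 + 1/16*a1^2*b1 - 1/8*a1^2*(-1/6) + 3/8*a1^2*(-17/360) - 1/2*a2*b1*(-1/6) + 1/16*b1*(-1/6)^2 + 1/4*a1*b1*(-1/6)^2 + 5/16*a1^2*b1*(-1/6) - 1/8*a1^3*(-1/6) + 1/4*a1^2*b1*(-1/6)^2) = 0 \<Longrightarrow> False"
  by algebra

lemma T_contra:
  fixes a1 a2 a3 b1 b2 b3 :: real
  shows "(1/16*a1 - 3/8*a2 - 3/16*a1^2 - 1/4*a1^3) = 0 \<Longrightarrow> (1/64*a1 + 3/32*a2 - 15/32*a3 - 1/32*a1*a2 - 5/64*a1^2 - 1/8*a1^2*a2 + 3/32*a1^3 + 7/16*a1^4 + 1/4*a1^5) = 0 \<Longrightarrow> (1/16*b1 - 3/8*b2 - 3/16*b1^2 - 1/4*b1^3) = 0 \<Longrightarrow> (1/64*b1 + 3/32*b2 - 15/32*b3 - 1/32*b1*b2 - 5/64*b1^2 - 1/8*b1^2*b2 + 3/32*b1^3 + 7/16*b1^4 + 1/4*b1^5) = 0 \<Longrightarrow> (1/2*a1 + 1/4*b1 - 3/4*(1/3)) = 0 \<Longrightarrow> (1/2*a2 + 1/16*b2 + 1/16*(1/3) - 15/16*(-4/45) - 1/8*a1*b1 + 1/8*a1*(1/3) - 3/16*b1*(1/3) - 1/2*a1*b1*(1/3) + 1/4*a1^2*(1/3)) = 0 \<Longrightarrow> (1/2*a3 + 1/64*b3 + 1/64*(1/3) + 3/32*(-4/45) - 63/64*(44/945) - 3/32*a1*b2 - 1/32*a1*(1/3)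 + 9/32*a1*(-4/45) - 1/8*a2*b1 + 1/8*a2*(1/3) - 3/64*b1*(1/3) - 7/64*b1*(-4/45) - 7/64*b2*(1/3) + 1/2*a1*a2*(1/3) + 3/32*a1*b1*(1/3) - 1/4*a1*b1*(-4/45) - 1/4*a1*b2*(1/3) + 1/16*a1^2*b1 - 1/8*a1^2*(1/3) + 3/8*a1^2*(-4/45) - 1/2*a2*b1*(1/3) + 1/16*b1*(1/3)^2 + 1/4*a1*b1*(1/3)^2 + 5/16*a1^2*b1*(1/3) - 1/8*a1^3*(1/3) + 1/4*a1^2*b1*(1/3)^2) = 0 \<Longrightarrow> False"
  by algebra

lemma NS_contra:
  fixes a1 a2 a3 b1 b2 b3 :: real
  shows "(1/16*a1 - 3/8*a2 - 3/16*a1^2 - 1/4*a1^3) = 0 \<Longrightarrow> (1/64*a1 + 3/32*a2 - 15/32*a3 - 1/32*a1*a2 - 5/64*a1^2 - 1/8*a1^2*a2 + 3/32*a1^3 + 7/16*a1^4 + 1/4*a1^5) = 0 \<Longrightarrow> (1/16*b1 - 3/8*b2 - 3/16*b1^2 - 1/4*b1^3) = 0 \<Longrightarrow> (1/64*b1 + 3/32*b2 - 15/32*b3 - 1/32*b1*b2 - 5/64*b1^2 - 1/8*b1^2*b2 + 3/32*b1^3 + 7/16*b1^4 + 1/4*b1^5) = 0 \<Longrightarrow> (1/2*a1 + 1/4*b1 - 3/4*(1/6)) = 0 \<Longrightarrow> (1/2*a2 + 1/16*b2 + 1/16*(1/6) - 15/16*(-17/360) - 1/8*a1*b1 + 1/8*a1*(1/6)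 - 3/16*b1*(1/6) - 1/2*a1*b1*(1/6) + 1/4*a1^2*(1/6)) = 0 \<Longrightarrow> (1/2*a3 + 1/64*b3 + 1/64*(1/6) + 3/32*(-17/360) - 63/64*(367/15120) - 3/32*a1*b2 - 1/32*a1*(1/6) + 9/32*a1*(-17/360) - 1/8*a2*b1 + 1/8*a2*(1/6) - 3/64*b1*(1/6) - 7/64*b1*(-17/360) - 7/64*b2*(1/6) + 1/2*a1*a2*(1/6) + 3/32*a1*b1*(1/6) - 1/4*a1*b1*(-17/360) - 1/4*a1*b2*(1/6) + 1/16*a1^2*b1 - 1/8*a1^2*(1/6) + 3/8*a1^2*(-17/360) - 1/2*a2*b1*(1/6) + 1/16*b1*(1/6)^2 + 1/4*a1*b1*(1/6)^2 + 5/16*a1^2*b1*(1/6) - 1/8*a1^3*(1/6) + 1/4*a1^2*b1*(1/6)^2) = 0 \<Longrightarrow> False"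
  by algebra

lemma P_rep: "rep seiffert_P (\<lambda>e. seiffert_P (1 - e) (1 + e))"
  apply (rule NF_rep[of seiffert_P arcsin])
  apply (rule P_NF)
  done

lemma P_sym: assumes "s > 0" "t > 0" shows "seiffert_P s t = seiffert_P t s"
  apply (rule NF_sym[of seiffert_P arcsin])
     apply (rule P_NF)
    apply (rule P_odd, assumption)
   apply (rule assms(1))
  apply (rule assms(2))
  done

lemma P_jet: "expands (\<lambda>e. seiffert_P (1 - e) (1 + e)) [1,0,-1/6,0,-17/360,0,-367/15120]"
  apply (rule NF_jet[of seiffert_P arcsin])
    apply (rule P_NF)
   apply (rule P_odd, assumption)
  apply (rule P_asy)
  done

lemma noP: "\<not> (\<exists>K M. good_mean K \<and> good_mean M \<and> stabilizable seiffert_P K M)"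
  apply (rule no_stab[OF P_rep P_sym P_jet])
    apply assumption
   apply assumption
  subgoal for a1 a2 a3 b1 b2 b3
    by (rule P_contra[of a1 a2 a3 b1 b2 b3]) (assumption+)
  done

lemma T_rep: "rep seiffert_T (\<lambda>e. seiffert_T (1 - e) (1 + e))"
  apply (rule NF_rep[of seiffert_T arctan])
  apply (rule T_NF)
  done

lemma T_sym: assumes "s > 0" "t > 0" shows "seiffert_T s t = seiffert_T t s"
  apply (rule NF_sym[of seiffert_T arctan])
     apply (rule T_NF)
    apply (rule T_odd, assumption)
   apply (rule assms(1))
  apply (rule assms(2))
  done

lemma T_jet: "expands (\<lambda>e. seiffert_T (1 - e) (1 + e)) [1,0,1/3,0,-4/45,0,44/945]"
  apply (rule NF_jet[of seiffert_T arctan])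
    apply (rule T_NF)
   apply (rule T_odd, assumption)
  apply (rule T_asy)
  done

lemma noT: "\<not> (\<exists>K M. good_mean K \<and> good_mean M \<and> stabilizable seiffert_T K M)"
  apply (rule no_stab[OF T_rep T_sym T_jet])
    apply assumption
   apply assumption
  subgoal for a1 a2 a3 b1 b2 b3
    by (rule T_contra[of a1 a2 a3 b1 b2 b3]) (assumption+)
  done

lemma NS_rep: "rep neuman_sandor (\<lambda>e. neuman_sandor (1 - e) (1 + e))"
  apply (rule NF_rep[of neuman_sandor arsinh])
  apply (rule NS_NF)
  done

lemma NS_sym: assumes "s > 0" "t > 0" shows "neuman_sandor s t = neuman_sandor t s"
  apply (rule NF_sym[of neuman_sandor arsinh])
     apply (rule NS_NF)
    apply (rule NS_odd, assumption)
   apply (rule assms(1))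
  apply (rule assms(2))
  done

lemma NS_jet: "expands (\<lambda>e. neuman_sandor (1 - e) (1 + e)) [1,0,1/6,0,-17/360,0,367/15120]"
  apply (rule NF_jet[of neuman_sandor arsinh])
    apply (rule NS_NF)
   apply (rule NS_odd, assumption)
  apply (rule NS_asy)
  done

lemma noNS: "\<not> (\<exists>K M. good_mean K \<and> good_mean M \<and> stabilizable neuman_sandor K M)"
  apply (rule no_stab[OF NS_rep NS_sym NS_jet])
    apply assumption
   apply assumption
  subgoal for a1 a2 a3 b1 b2 b3
    by (rule NS_contra[of a1 a2 a3 b1 b2 b3]) (assumption+)
  done

theorem mainTheorem16:
  shows "\<forall>N \<in> {seiffert_P, seiffert_T, neuman_sandor}.
           \<not> (\<exists>K M. good_mean K \<and> good_mean M \<and> stabilizable N K M)"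
  using noP noT noNS by auto

end
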